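(* Let $M$ be a Lagrangian submanifold of $N$ such that $A$ and $B$ take type II form with respect to a $\Delta_2$-orthonormal frame $\{E_1,E_2,E_3\}$ (with angle functions $\theta_1,\theta_2$). Then $h(E_1,E_1)=0$ (i.e. $h_{11}^1=h_{11}^2=h_{11}^3=0$), and $E_1(\theta_1)=0$, $E_2(\theta_1)=-h_{22}^2$, $E_3(\theta_1)=-h_{12}^3$, $E_1(\theta_2)=-h_{33}^2$, $E_2(\theta_2)=-h_{33}^1$, $E_3(\theta_2)=-h_{33}^3$. Furthermore $h_{33}^1=-2h_{22}^2$, $h_{33}^2=0$, $h_{33}^3=-2h_{12}^3$.
   Context: Let $\langle\alpha,\beta\rangle=\tfrac12\operatorname{tr}(\alpha\beta)$ on $\mathfrak{sl}(2,\mathbb R)$ (traceless real $2\times2$ matrices); tangent vectors of $\mathrm{SL}(2,\mathbb R)$ at $a$ are $a\alpha$, $\alpha\in\mathfrak{sl}(2,\mathbb R)$. On $N=\mathrm{SL}(2,\mathbb R)\times\mathrm{SL}(2,\mathbb R)$: $g((a\alpha,b\beta),(a\gamma,b\delta))=\tfrac23(\langle\alpha,\gamma\rangle+\langle\beta,\delta\rangle)-\tfrac13(\langle\beta,\gamma\rangle+\langle\alpha,\delta\rangle)$, $J(a\alpha,b\beta)=\tfrac1{\sqrt3}(a(\alpha-2\beta),b(2\alpha-\beta))$, $P(a\alpha,b\beta)=(a\beta,b\alpha)$; $\tilde\nabla$ is the Levi-Civita connection of $g$, $G(X,Y)=(\tilde\nabla_XJ)Y$. A Lagrangian submanifold $M$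 is 3-dimensional with nondegenerate induced metric and $J(TM)$ equal to the normal bundle; $P|_{TM}=A+JB$ with $A,B:TM\to TM$. The induced Levi-Civita connection $\nabla$ and second fundamental form $h$ are defined by $\tilde\nabla_XY=\nabla_XY+h(X,Y)$. A local frame $\{E_1,E_2,E_3\}$ on $M$ is $\Delta_2$-orthonormal if $g(E_1,E_1)=g(E_2,E_2)=0$, $g(E_1,E_2)=1$, $g(E_3,E_3)=1$, $g(E_1,E_3)=g(E_2,E_3)=0$; frames are normalized so that $JG(E_1,E_2)=\sqrt{2/3}\,E_3$. Write $h(E_i,E_j)=\sum_k h_{ij}^kJE_k$. $A,B$ take type II form with respect to the frame if, writing the matrix whose $j$-th column lists the coordinates of $AE_j$ (resp. $BE_j$), $A=\begin{pmatrix}\cos2\theta_1&1&0\\0&\cos2\theta_1&0\\0&0&\cos2\theta_2\end{pmatrix}$, $B=\begin{pmatrix}\sin2\theta_1&-\cot2\theta_1&0\\0&\sin2\theta_1&0\\0&0&\sin2\theta_2\end{pmatrix}$ for functions $\theta_1,\theta_2$ with $2\theta_1+\theta_2\equiv0 \pmod\pi$ and $\theta_1\not\equiv0,\pi/2\pmod\pi$. $E_i(\theta)$ denotes the derivative of $\theta$ along $E_i$. *)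

theory Defs
  imports "HOL-Analysis.Analysis"
begin

type_synonym m2 = "real^2^2"
type_synonym pt = "m2 \<times> m2"     (* element of sl(2,R) x sl(2,R) (left trivialization) *)
type_synonym crd = "real^3"       (* local coordinates on M *)

fun Ck :: "nat \<Rightarrow> ('a::real_normed_vector \<Rightarrow> 'b::real_normed_vector) \<Rightarrow> 'a set \<Rightarrow> bool" where
  "Ck 0 f U = continuous_on U f"
| "Ck (Suc n) f U = ((\<forall>x\<in>U. f differentiable (at x)) \<and> continuous_on U f \<and>
       (\<forall>v. Ck n (\<lambda>x. frechet_derivative f (at x) v) U))"

definition smooth_on :: "('a::real_normed_vector \<Rightarrow> 'b::real_normed_vector) \<Rightarrow> 'a set \<Rightarrow> bool" where
  "smooth_on f U = (\<forall>n. Ck n f U)"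

definition SL2 :: "m2 set" where "SL2 = {a. det a = 1}"
definition sl2 :: "m2 set" where "sl2 = {\<alpha>. trace \<alpha> = 0}"

definition ip :: "m2 \<Rightarrow> m2 \<Rightarrow> real" where "ip \<alpha> \<beta> = trace (\<alpha> ** \<beta>) / 2"

text \<open>The metric g, the almost complex structure J and the almost product structure P,
  all left-invariant, written on left-trivialized tangent vectors (a\<alpha>,b\<beta>) \<mapsto> (\<alpha>,\<beta>).\<close>
definition gN :: "pt \<Rightarrow> pt \<Rightarrow> real" where
  "gN x y = 2/3 * (ip (fst x) (fst y) + ip (snd x) (snd y)) - 1/3 * (ip (snd x) (fst y) + ip (fst x) (snd y))"

definition JN :: "pt \<Rightarrow> pt" where
  "JN x = ((1 / sqrt 3) *\<^sub>R (fst x - 2 *\<^sub>R snd x), (1 / sqrt 3) *\<^sub>R (2 *\<^sub>R fst x - snd x))"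

definition PN :: "pt \<Rightarrow> pt" where "PN x = (snd x, fst x)"

definition brk :: "pt \<Rightarrow> pt \<Rightarrow> pt" where
  "brk x y = (fst x ** fst y - fst y ** fst x, snd x ** snd y - snd y ** snd x)"

definition LC :: "pt \<Rightarrow> pt \<Rightarrow> pt" where
  "LC x y = (THE z. z \<in> sl2 \<times> sl2 \<and> (\<forall>w\<in>sl2 \<times> sl2.
      gN z w = (gN (brk x y) w - gN (brk y w) x + gN (brk w x) y) / 2))"

definition ltriv :: "(crd \<Rightarrow> pt) \<Rightarrow> crd \<Rightarrow> pt \<Rightarrow> pt" where
  "ltriv F u V = (matrix_inv (fst (F u)) ** fst V, matrix_inv (snd (F u)) ** snd V)"

definition tanF :: "(crd \<Rightarrow> pt) \<Rightarrow> crd \<Rightarrow> crd \<Rightarrow> pt" where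
  "tanF F u v = ltriv F u (frechet_derivative F (at u) v)"

text \<open>Levi-Civita covariant derivative along F, in direction of coordinate vector v at u,
  of a vector field Y along F (given in left-trivialized form).\<close>
definition covD :: "(crd \<Rightarrow> pt) \<Rightarrow> (crd \<Rightarrow> pt) \<Rightarrow> crd \<Rightarrow> crd \<Rightarrow> pt" where
  "covD F Y u v = frechet_derivative Y (at u) v + LC (tanF F u v) (Y u)"

definition GN :: "pt \<Rightarrow> pt \<Rightarrow> pt" where
  "GN x y = LC x (JN y) - JN (LC x y)"

end

theory Submission
  imports Defs
begin

definition bra :: "m2 \<Rightarrow> m2 \<Rightarrow> m2" where "bra a b = a ** b - b ** a"
definition LCc :: "pt \<Rightarrow> pt \<Rightarrow> pt" where
  "LCc x y = (let m = bra (snd x) (fst y) - bra (fst x) (snd y) in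
     ((1/2) *\<^sub>R bra (fst x) (fst y) + (1/6) *\<^sub>R m, (1/2) *\<^sub>R bra (snd x) (snd y) - (1/6) *\<^sub>R m))"
definition J0 :: "pt \<Rightarrow> pt" where "J0 x = (fst x - 2 *\<^sub>R snd x, 2 *\<^sub>R fst x - snd x)"
definition G0 where "G0 x y = LCc x (J0 y) - J0 (LCc x y)"
definition Qm :: "pt \<Rightarrow> pt" where
  "Qm x = ((2/3) *\<^sub>R fst x - (1/3) *\<^sub>R snd x, (2/3) *\<^sub>R snd x - (1/3) *\<^sub>R fst x)"
definition Qi :: "pt \<Rightarrow> pt" where
  "Qi x = (2 *\<^sub>R fst x + snd x, 2 *\<^sub>R snd x + fst x)"
definition ip0 :: "pt \<Rightarrow> pt \<Rightarrow> real" where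
  "ip0 x y = ip (fst x) (fst y) + ip (snd x) (snd y)"

lemmas ex = prod_eq_iff vec_eq_iff forall_2 matrix_matrix_mult_def sum_2 trace_def
  gN_def ip_def brk_def LCc_def bra_def J0_def Let_def G0_def Qm_def Qi_def ip0_def PN_def

lemma G0_anti: "G0 x y = - G0 y x"
  by (simp add: ex algebra_simps)
lemma K0: "LCc x (PN y) - PN (LCc x y) = (1/6) *\<^sub>R J0 (G0 x (PN y) + PN (G0 x y))"
  by (simp add: ex algebra_simps)
lemma torsc: "LCc x y - LCc y x = brk x y"
  by (simp add: ex algebra_simps)
lemma LCc_alt: "LCc x y = (1/2) *\<^sub>R (brk x y + Qi (brk x (Qm y) - brk (Qm x) y))"
  by (simp add: ex algebra_simps)
lemma gN_ip0: "gN x y = ip0 x (Qm y)"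
  by (simp add: ex algebra_simps divide_simps)
lemma ip0_sym: "ip0 x y = ip0 y x"
  by (simp add: ex algebra_simps divide_simps)
lemma ip0_brk: "ip0 (brk a b) c = ip0 a (brk b c)"
  by (simp add: ex algebra_simps divide_simps)
lemma ip0_Qm: "ip0 (Qm a) b = ip0 a (Qm b)"
  by (simp add: ex algebra_simps divide_simps)
lemma Qm_Qi: "Qm (Qi x) = x"
  by (simp add: ex algebra_simps)
lemma ip0_add: "ip0 (a + b) c = ip0 a c + ip0 b c"
  by (simp add: ex algebra_simps divide_simps)
lemma ip0_diff: "ip0 (a - b) c = ip0 a c - ip0 b c"
  by (simp add: ex algebra_simps divide_simps)
lemma ip0_scale: "ip0 (r *\<^sub>R a) c = r * ip0 a c"
  by (simp add: ex algebra_simps divide_simps)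
lemma brk_anti: "brk y x = - brk x y"
  by (simp add: brk_def)

lemma gN_diff: "gN (a - b) c = gN a c - gN b c"
  by (simp add: gN_ip0 ip0_diff)
lemma gN_add: "gN (a + b) c = gN a c + gN b c"
  by (simp add: gN_ip0 ip0_add)
lemma gN_scale: "gN (r *\<^sub>R a) c = r * gN a c"
  by (simp add: gN_ip0 ip0_scale)

lemma koszulc: "gN (LCc x y) w = (gN (brk x y) w - gN (brk y w) x + gN (brk w x) y) / 2"
proof -
  have "gN (LCc x y) w = ip0 (LCc x y) (Qm w)" by (rule gN_ip0)
  also have "\<dots> = (1/2) * (ip0 (brk x y) (Qm w) + ip0 (Qi (brk x (Qm y) - brk (Qm x) y)) (Qm w))"
    by (simp add: LCc_alt ip0_scale ip0_add)
  also have "ip0 (Qi (brk x (Qm y) - brk (Qm x) y)) (Qm w) = ip0 (brk x (Qm y) - brk (Qm x) y) w"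
    by (metis ip0_Qm Qm_Qi ip0_sym)
  also have "\<dots> = ip0 (brk x (Qm y)) w - ip0 (brk (Qm x) y) w" by (rule ip0_diff)
  finally have 1: "gN (LCc x y) w = (1/2) * (gN (brk x y) w + ip0 (brk x (Qm y)) w - ip0 (brk (Qm x) y) w)"
    by (simp add: gN_ip0)
  have 2: "gN (brk y w) x = ip0 (brk (Qm x) y) w"
    by (metis gN_ip0 ip0_sym ip0_brk)
  have 3: "gN (brk w x) y = ip0 (brk x (Qm y)) w"
    by (metis gN_ip0 ip0_sym ip0_brk)
  show ?thesis using 1 2 3 by simp
qed

definition mk2 :: "real \<Rightarrow> real \<Rightarrow> real \<Rightarrow> real \<Rightarrow> m2" where
  "mk2 a b c d = (\<chi> i j. if i = 1 then (if j = 1 then a else b) else (if j = 1 then c else d))"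
lemma mk2_simps[simp]: "mk2 a b c d $ 1 $ 1 = a" "mk2 a b c d $ 1 $ 2 = b"
  "mk2 a b c d $ 2 $ 1 = c" "mk2 a b c d $ 2 $ 2 = d"
  by (simp_all add: mk2_def)

lemma trace_scaleR: "trace (r *\<^sub>R a) = r * trace (a::m2)"
  by (simp add: trace_def sum_2 algebra_simps)
lemma trace_bra: "trace (bra a b) = 0"
  by (simp add: ex)
lemma LCc_sl2: "LCc x y \<in> sl2 \<times> sl2"
  by (simp add: sl2_def LCc_def Let_def trace_add trace_sub trace_bra trace_scaleR)

lemma nondeg_sl2:
  assumes d: "d \<in> sl2 \<times> sl2" and h: "\<forall>w\<in>sl2 \<times> sl2. gN d w = 0"
  shows "d = 0"
proof -
  have Qi_sl: "Qi e \<in> sl2 \<times> sl2" if "e \<in> sl2 \<times> sl2" for e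
    using that by (auto simp add: sl2_def Qi_def trace_add trace_scaleR)
  have ip: "ip0 d e = 0" if "e \<in> sl2 \<times> sl2" for e
    using h[rule_format, OF Qi_sl[OF that]] by (simp add: gN_ip0 Qm_Qi)
  have H: "mk2 1 0 0 (-1) \<in> sl2" "mk2 0 1 0 0 \<in> sl2" "mk2 0 0 1 0 \<in> sl2" "(0::m2) \<in> sl2"
    by (simp_all add: sl2_def trace_def sum_2)
  have e1: "ip0 d (mk2 1 0 0 (-1), 0) = 0" using ip H by simp
  have e2: "ip0 d (mk2 0 1 0 0, 0) = 0" using ip H by simp
  have e3: "ip0 d (mk2 0 0 1 0, 0) = 0" using ip H by simp
  have e4: "ip0 d (0, mk2 1 0 0 (-1)) = 0" using ip H by simp
  have e5: "ip0 d (0, mk2 0 1 0 0) = 0" using ip H by simp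
  have e6: "ip0 d (0, mk2 0 0 1 0) = 0" using ip H by simp
  have t: "fst d $ 1 $ 1 + fst d $ 2 $ 2 = 0" "snd d $ 1 $ 1 + snd d $ 2 $ 2 = 0"
    using d by (auto simp: sl2_def trace_def sum_2)
  show ?thesis using e1 e2 e3 e4 e5 e6 t
    by (simp add: ex) 
qed

lemma LC_eq: "LC x y = LCc x y"
  unfolding LC_def
proof (rule the_equality)
  show "LCc x y \<in> sl2 \<times> sl2 \<and> (\<forall>w\<in>sl2 \<times> sl2. gN (LCc x y) w = (gN (brk x y) w - gN (brk y w) x + gN (brk w x) y) / 2)"
    using LCc_sl2 koszulc by blast
next
  fix z assume z: "z \<in> sl2 \<times> sl2 \<and> (\<forall>w\<in>sl2 \<times> sl2. gN z w = (gN (brk x y) w - gN (brk y w) x + gN (brk w x) y) / 2)"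
  have "z - LCc x y \<in> sl2 \<times> sl2" using z LCc_sl2[of x y]
    unfolding sl2_def by (cases z, cases "LCc x y") (simp add: trace_sub)
  moreover have "\<forall>w\<in>sl2 \<times> sl2. gN (z - LCc x y) w = 0"
  proof
    fix w assume w: "w \<in> sl2 \<times> sl2"
    have "gN z w = (gN (brk x y) w - gN (brk y w) x + gN (brk w x) y) / 2" using z w by blast
    then show "gN (z - LCc x y) w = 0" using koszulc[of x y w] by (simp only: gN_diff)
  qed
  ultimately have "z - LCc x y = 0" by (rule nondeg_sl2)
  then show "z = LCc x y" by simp
qed

lemma J0_add: "J0 (a + b) = J0 a + J0 b" by (simp add: J0_def algebra_simps)
lemma J0_diff: "J0 (a - b) = J0 a - J0 b" by (simp add: J0_def algebra_simps)
lemma J0_scale: "J0 (r *\<^sub>R a) = r *\<^sub>R J0 a" by (simp add: J0_def algebra_simps)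
lemma J0_J0: "J0 (J0 a) = (-3) *\<^sub>R a" by (simp add: ex algebra_simps)
lemma JN_J0: "JN x = (1 / sqrt 3) *\<^sub>R J0 x" by (simp add: JN_def J0_def)
lemma JN_add: "JN (a + b) = JN a + JN b" by (simp add: JN_J0 J0_add algebra_simps)
lemma JN_diff: "JN (a - b) = JN a - JN b" by (simp add: JN_J0 J0_diff algebra_simps)
lemma JN_scale: "JN (r *\<^sub>R a) = r *\<^sub>R JN a" by (simp add: JN_J0 J0_scale)
lemma JN_minus: "JN (- a) = - JN a" using JN_scale[of "-1" a] by simp
lemma JN_zero: "JN 0 = 0" using JN_scale[of 0 0] by simp
lemma s3: "sqrt 3 * sqrt 3 = (3::real)" by simp
lemma JN_JN: "JN (JN a) = - a"
proof -
  have "JN (JN a) = ((1/sqrt 3) * (1 / sqrt 3)) *\<^sub>R J0 (J0 a)" by (simp add: JN_J0 J0_scale)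
  also have "(1/sqrt 3) * (1 / sqrt 3) = (1/3::real)" using s3 by (simp add: field_simps)
  finally show ?thesis by (simp add: J0_J0)
qed
lemma PN_add: "PN (a + b) = PN a + PN b" by (simp add: PN_def)
lemma PN_diff: "PN (a - b) = PN a - PN b" by (simp add: PN_def)
lemma PN_scale: "PN (r *\<^sub>R a) = r *\<^sub>R PN a" by (simp add: PN_def)
lemma PN_minus: "PN (- a) = - PN a" by (simp add: PN_def)
lemma PN_PN: "PN (PN a) = a" by (simp add: PN_def)
lemma PN_J0: "PN (J0 a) = - J0 (PN a)" by (simp add: PN_def J0_def algebra_simps)
lemma PN_JN: "PN (JN a) = - JN (PN a)" by (simp add: JN_J0 PN_scale PN_J0)

lemma gN_sym: "gN x y = gN y x" by (metis gN_ip0 ip0_Qm ip0_sym)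
lemma gN_add2: "gN c (a + b) = gN c a + gN c b" by (metis gN_sym gN_add)
lemma gN_diff2: "gN c (a - b) = gN c a - gN c b" by (metis gN_sym gN_diff)
lemma gN_scale2: "gN c (r *\<^sub>R a) = r * gN c a" by (metis gN_sym gN_scale)
lemma gN_minus: "gN (- a) c = - gN a c" using gN_scale[of "-1" a c] by simp
lemma gN_minus2: "gN c (- a) = - gN c a" using gN_scale2[of c "-1" a] by simp
lemma gN_zero: "gN 0 c = 0" using gN_scale[of 0 0 c] by simp
lemma gN_zero2: "gN c 0 = 0" using gN_scale2[of c 0 0] by simp
lemma gN_J0: "gN (J0 x) y = - gN x (J0 y)"
  by (simp add: ex algebra_simps divide_simps)
lemma gN_J: "gN (JN x) y = - gN x (JN y)"
  by (simp add: JN_J0 gN_scale gN_scale2 gN_J0)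
lemma gN_JJ: "gN (JN x) (JN y) = gN x y"
  by (simp add: gN_J JN_JN gN_minus2)
lemma gN_P: "gN (PN x) y = gN x (PN y)"
  by (simp add: ex algebra_simps divide_simps)
lemma gN_Jself: "gN (JN x) x = 0"
  using gN_J[of x x] gN_sym[of x "JN x"] by simp

lemma LC_add1: "LC (a + b) c = LC a c + LC b c" by (simp add: LC_eq ex algebra_simps)
lemma LC_add2: "LC c (a + b) = LC c a + LC c b" by (simp add: LC_eq ex algebra_simps)
lemma LC_diff1: "LC (a - b) c = LC a c - LC b c" by (simp add: LC_eq ex algebra_simps)
lemma LC_diff2: "LC c (a - b) = LC c a - LC c b" by (simp add: LC_eq ex algebra_simps)
lemma LC_scale1: "LC (r *\<^sub>R a) c = r *\<^sub>R LC a c" by (simp add: LC_eq ex algebra_simps)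
lemma LC_scale2: "LC c (r *\<^sub>R a) = r *\<^sub>R LC c a" by (simp add: LC_eq ex algebra_simps)
lemma LC_minus2: "LC c (- a) = - LC c a" using LC_scale2[of c "-1" a] by simp
lemma LC_tors: "LC x y - LC y x = brk x y" by (simp add: LC_eq torsc)

lemma LC_compat: "gN (LC x y) z = - gN y (LC x z)"
proof -
  have b1: "brk z y = - brk y z" "brk x z = - brk z x" "brk y x = - brk x y" by (simp_all add: brk_def)
  have "2 * (gN (LC x y) z + gN (LC x z) y) = 0"
    using koszulc[of x y z] koszulc[of x z y] by (simp add: LC_eq b1 gN_minus)
  then show ?thesis by (simp add: gN_sym[of y])
qed
lemma LC_self: "gN (LC x y) y = 0"
  using LC_compat[of x y y] gN_sym[of y "LC x y"] by simp

lemma GN_G0: "GN x y = (1 / sqrt 3) *\<^sub>R G0 x y"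
  by (simp add: GN_def G0_def LC_eq JN_J0 LC_scale2[unfolded LC_eq] algebra_simps)
lemma GN_anti: "GN x y = - GN y x"
  by (simp add: GN_G0 G0_anti[of x y])
lemma GN_self: "GN x x = 0" by (simp add: GN_G0 ex algebra_simps)
lemma GN_J: "GN x (JN y) = - JN (GN x y)"
  by (simp add: GN_def JN_JN LC_minus2 JN_diff)
lemma GN_add2: "GN c (a + b) = GN c a + GN c b" by (simp add: GN_def JN_add LC_add2)
lemma GN_diff2: "GN c (a - b) = GN c a - GN c b" by (simp add: GN_def JN_diff LC_diff2)
lemma GN_scale2: "GN c (r *\<^sub>R a) = r *\<^sub>R GN c a" by (simp add: GN_def JN_scale LC_scale2 algebra_simps)
lemma GN_minus2: "GN c (- a) = - GN c a" using GN_scale2[of c "-1" a] by simp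
lemma GN_add1: "GN (a + b) c = GN a c + GN b c" by (simp add: GN_def JN_add LC_add1)
lemma GN_scale1: "GN (r *\<^sub>R a) c = r *\<^sub>R GN a c" by (simp add: GN_def JN_scale LC_scale1 algebra_simps)
lemma GN_skew: "gN (GN x y) z = - gN (GN x z) y"
proof -
  have "gN (GN x y) z = gN (LC x (JN y)) z - gN (JN (LC x y)) z" by (simp add: GN_def gN_diff)
  also have "\<dots> = - gN (JN y) (LC x z) + gN (LC x y) (JN z)" by (simp add: LC_compat gN_J)
  finally have 1: "gN (GN x y) z = - gN (JN y) (LC x z) + gN (LC x y) (JN z)" .
  have "gN (GN x z) y = gN (LC x (JN z)) y - gN (JN (LC x z)) y" by (simp add: GN_def gN_diff)
  also have "\<dots> = - gN (JN z) (LC x y) + gN (LC x z) (JN y)" by (simp add: LC_compat gN_J)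
  finally have 2: "gN (GN x z) y = - gN (JN z) (LC x y) + gN (LC x z) (JN y)" .
  show ?thesis using 1 2 gN_sym[of "JN y"] gN_sym[of "JN z"] by simp
qed
lemma GN_self2: "gN (GN x y) y = 0" using GN_skew[of x y y] by simp
lemma GN_self3: "gN (GN x y) x = 0" using GN_self2[of y x] GN_anti[of x y] by (simp add: gN_minus)
lemma GN_omega_self: "gN (GN x y) (JN y) = 0"
proof -
  have "gN (GN x y) (JN y) = - gN (GN x (JN y)) y" by (rule GN_skew)
  also have "\<dots> = gN (JN (GN x y)) y" by (simp add: GN_J gN_minus)
  also have "\<dots> = - gN (GN x y) (JN y)" by (rule gN_J)
  finally show ?thesis by simp
qed
lemma LC_P: "PN (LC x y) = LC x (PN y) - (1/2) *\<^sub>R JN (GN x (PN y) + PN (GN x y))"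
proof -
  have e: "(1/sqrt 3) * (1/sqrt 3) = (1/3::real)" using s3 by (simp add: field_simps)
  have "GN x (PN y) + PN (GN x y) = (1/sqrt 3) *\<^sub>R (G0 x (PN y) + PN (G0 x y))"
    by (simp add: GN_G0 PN_scale scaleR_add_right)
  then have "JN (GN x (PN y) + PN (GN x y)) = ((1/sqrt 3) * (1/sqrt 3)) *\<^sub>R J0 (G0 x (PN y) + PN (G0 x y))"
    by (simp only: JN_J0 J0_scale scaleR_scaleR)
  then have "(1/2) *\<^sub>R JN (GN x (PN y) + PN (GN x y)) = (1/6) *\<^sub>R J0 (G0 x (PN y) + PN (G0 x y))"
    by (simp add: e)
  then show ?thesis using K0[of x y] by (simp add: LC_eq algebra_simps)
qed
lemma LC_J: "LC x (JN y) = JN (LC x y) + GN x y" by (simp add: GN_def)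

lemmas lin = gN_add gN_add2 gN_diff gN_diff2 gN_scale gN_scale2 gN_minus gN_minus2 gN_zero gN_zero2
  JN_add JN_diff JN_scale JN_minus JN_JN JN_zero PN_add PN_diff PN_scale PN_minus PN_JN
  LC_add2 LC_diff2 LC_scale2 LC_minus2 GN_add2 GN_diff2 GN_scale2 GN_minus2 GN_J LC_J gN_J gN_P

lemma L1:
  assumes P: "PN y = C *\<^sub>R y + S *\<^sub>R JN y" and CS: "C^2 + S^2 = 1"
  shows "gN (LC x y) (JN y) = 0"
proof -
  let ?L = "LC x y" let ?q = "gN ?L (JN y)" let ?G = "GN x y"
  have o1: "gN ?G y = 0" by (rule GN_self2)
  have o2: "gN ?G (JN y) = 0" by (rule GN_omega_self)
  have l0: "gN ?L y = 0" by (rule LC_self)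
  have K: "PN ?L = LC x (PN y) - (1/2) *\<^sub>R JN (GN x (PN y) + PN ?G)" by (rule LC_P)
  have "gN (PN ?L) y = gN (LC x (PN y) - (1/2) *\<^sub>R JN (GN x (PN y) + PN ?G)) y" using K by simp
  then have e1: "S * ?q = - S * ?q"
    by (simp add: lin P o1 o2 l0 algebra_simps)
  have "gN (PN ?L) (JN y) = gN (LC x (PN y) - (1/2) *\<^sub>R JN (GN x (PN y) + PN ?G)) (JN y)" using K by simp
  then have e2: "C * ?q = - C * ?q"
    by (simp add: lin P o1 o2 l0 algebra_simps)
  show ?thesis
  proof (rule ccontr)
    assume "?q \<noteq> 0"
    then have "S = 0" "C = 0" using e1 e2 by auto
    then show False using CS by simp
  qed
qed

lemma L2:
  assumes P1: "PN y1 = C *\<^sub>R y1 + S *\<^sub>R JN y1"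
    and P2: "PN y2 = y1 + C *\<^sub>R y2 + JN ((- ct) *\<^sub>R y1 + S *\<^sub>R y2)"
    and S: "S \<noteq> 0" and q1: "gN (LC x y1) (JN y1) = 0" and nr: "gN (GN x y1) y2 = 0"
  shows "gN (LC x y1) (JN y2) = 0"
proof -
  let ?L = "LC x y1" let ?G = "GN x y1"
  have o1: "gN ?G y1 = 0" by (rule GN_self2)
  have o2: "gN ?G (JN y1) = 0" by (rule GN_omega_self)
  have l0: "gN ?L y1 = 0" by (rule LC_self)
  have K: "PN ?L = LC x (PN y1) - (1/2) *\<^sub>R JN (GN x (PN y1) + PN ?G)" by (rule LC_P)
  have "gN (PN ?L) y2 = gN (LC x (PN y1) - (1/2) *\<^sub>R JN (GN x (PN y1) + PN ?G)) y2" using K by simp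
  then have e1: "S * gN ?L (JN y2) = - S * gN ?L (JN y2)"
    by (simp add: lin P1 P2 o1 o2 l0 q1 nr algebra_simps)
  then show ?thesis using S by simp
qed

lemma LC_swap: "gN (LC x y) (JN z) - gN (LC x z) (JN y) = gN (GN x y) z"
proof -
  have "gN (LC x z) (JN y) = - gN z (LC x (JN y))" by (rule LC_compat)
  also have "\<dots> = - gN z (JN (LC x y)) - gN z (GN x y)" by (simp add: LC_J gN_add2)
  also have "gN z (JN (LC x y)) = - gN (LC x y) (JN z)" by (metis gN_J gN_sym)
  finally show ?thesis by (simp add: gN_sym[of z])
qed

lemma sum3: "(\<Sum>k\<in>{1,2,3::nat}. f k) = f 1 + f 2 + f 3" by (simp add: add.assoc)

lemma core:
  fixes X :: "nat \<Rightarrow> pt" and D :: "nat \<Rightarrow> nat \<Rightarrow> pt" and a b :: "nat \<Rightarrow> real"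
    and c h :: "nat \<Rightarrow> nat \<Rightarrow> nat \<Rightarrow> real" and C S C2 S2 ct :: real
  assumes Lag: "\<And>j k. j \<in> {1,2,3} \<Longrightarrow> k \<in> {1,2,3} \<Longrightarrow> gN (JN (X j)) (X k) = 0"
    and fr: "gN (X 1) (X 1) = 0" "gN (X 2) (X 2) = 0" "gN (X 1) (X 2) = 1"
       "gN (X 3) (X 3) = 1" "gN (X 1) (X 3) = 0" "gN (X 2) (X 3) = 0"
    and nrm: "JN (GN (X 1) (X 2)) = sqrt (2/3) *\<^sub>R X 3"
    and P1: "PN (X 1) = C *\<^sub>R X 1 + S *\<^sub>R JN (X 1)"
    and P2: "PN (X 2) = X 1 + C *\<^sub>R X 2 + JN ((- ct) *\<^sub>R X 1 + S *\<^sub>R X 2)"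
    and P3: "PN (X 3) = C2 *\<^sub>R X 3 + S2 *\<^sub>R JN (X 3)"
    and CS: "C^2 + S^2 = 1" "S \<noteq> 0" "C2^2 + S2^2 = 1"
    and gauss: "\<And>i j. i \<in> {1,2,3} \<Longrightarrow> j \<in> {1,2,3} \<Longrightarrow> D i j + LC (X i) (X j) =
          (\<Sum>k\<in>{1,2,3}. c i j k *\<^sub>R X k) + (\<Sum>k\<in>{1,2,3}. h i j k *\<^sub>R JN (X k))"
    and dP1: "\<And>i. i \<in> {1,2,3} \<Longrightarrow> PN (D i 1) = C *\<^sub>R D i 1 + S *\<^sub>R JN (D i 1)
          + (- 2 * S * a i) *\<^sub>R X 1 + (2 * C * a i) *\<^sub>R JN (X 1)"
    and dP3: "\<And>i. i \<in> {1,2,3} \<Longrightarrow> PN (D i 3) = C2 *\<^sub>R D i 3 + S2 *\<^sub>R JN (D i 3)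
          + (- 2 * S2 * b i) *\<^sub>R X 3 + (2 * C2 * b i) *\<^sub>R JN (X 3)"
    and dM: "\<And>i. i \<in> {1,2,3} \<Longrightarrow> gN (D i 1) (X 1) = 0"
    and dL: "\<And>i j k. i \<in> {1,2,3} \<Longrightarrow> j \<in> {1,2,3} \<Longrightarrow> k \<in> {1,2,3} \<Longrightarrow>
          gN (JN (D i j)) (X k) + gN (JN (X j)) (D i k) = 0"
    and dS: "\<And>i j k. i \<in> {1,2,3} \<Longrightarrow> j \<in> {1,2,3} \<Longrightarrow> k \<in> {1,2,3} \<Longrightarrow>
          gN (D i j - D j i + brk (X i) (X j)) (JN (X k)) = 0"
    and dA: "\<And>i. i \<in> {1,2,3} \<Longrightarrow> 2 * a i + b i = 0"
  shows "h 1 1 1 = 0 \<and> h 1 1 2 = 0 \<and> h 1 1 3 = 0 \<and> a 1 = 0 \<and> a 2 = - h 2 2 2 \<and>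
     a 3 = - h 1 2 3 \<and> b 1 = - h 3 3 2 \<and> b 2 = - h 3 3 1 \<and> b 3 = - h 3 3 3 \<and>
     h 3 3 1 = - 2 * h 2 2 2 \<and> h 3 3 2 = 0 \<and> h 3 3 3 = - 2 * h 1 2 3"
proof -
  have LagR: "gN (X m) (JN (X k)) = 0" if "m \<in> {1,2,3}" "k \<in> {1,2,3}" for m k
    using Lag[OF that(2,1)] gN_sym by metis
  have frs: "gN (X 2) (X 1) = 1" "gN (X 3) (X 1) = 0" "gN (X 3) (X 2) = 0"
    using fr gN_sym by metis+
  define Ht where "Ht i j k = gN (D i j + LC (X i) (X j)) (JN (X k))" for i j k
  have Hth: "Ht i j 1 = h i j 2 \<and> Ht i j 2 = h i j 1 \<and> Ht i j 3 = h i j 3"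
    if "i \<in> {1,2,3}" "j \<in> {1,2,3}" for i j
    unfolding Ht_def gauss[OF that] sum3 using fr frs
    by (simp add: lin LagR One_nat_def)
  have b0: "gN (GN (X 1) (X 2)) (X 3) = 0"
  proof -
    have "gN (GN (X 1) (X 2)) (X 3) = gN (JN (GN (X 1) (X 2))) (JN (X 3))" by (rule gN_JJ[symmetric])
    also have "\<dots> = sqrt (2/3) * gN (X 3) (JN (X 3))" by (simp only: nrm gN_scale)
    finally show ?thesis using LagR by simp
  qed
  have p132: "gN (GN (X 1) (X 3)) (X 2) = 0" using GN_skew[of "X 1" "X 2" "X 3"] b0 by simp
  have p213: "gN (GN (X 2) (X 1)) (X 3) = 0" using GN_anti[of "X 2" "X 1"] b0 by (simp add: gN_minus)
  have p231: "gN (GN (X 2) (X 3)) (X 1) = 0" using GN_skew[of "X 2" "X 3" "X 1"] p213 by simp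
  have p312: "gN (GN (X 3) (X 1)) (X 2) = 0" using GN_anti[of "X 3" "X 1"] p132 by (simp add: gN_minus)
  have p321: "gN (GN (X 3) (X 2)) (X 1) = 0" using GN_skew[of "X 3" "X 2" "X 1"] p312 by simp
  have GNn: "gN (GN (X i) (X j)) (X k) = 0" if "i \<in> {1,2,3}" "j \<in> {1,2,3}" "k \<in> {1,2,3}" for i j k
    using that b0 p132 p213 p231 p312 p321 by (auto simp: GN_self GN_self2 GN_self3 gN_zero)
  have Hl: "Ht i j k = Ht i k j" if "i \<in> {1,2,3}" "j \<in> {1,2,3}" "k \<in> {1,2,3}" for i j k
  proof -
    have 1: "gN (D i j) (JN (X k)) = gN (D i k) (JN (X j))"
    proof -
      have "gN (X j) (JN (D i k)) = - gN (D i k) (JN (X j))" by (metis gN_J gN_sym)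
      then show ?thesis using dL[OF that] by (simp add: gN_J)
    qed
    have 2: "gN (LC (X i) (X j)) (JN (X k)) - gN (LC (X i) (X k)) (JN (X j)) = 0"
      using LC_swap GNn[OF that] by simp
    show ?thesis unfolding Ht_def using 1 2 by (simp add: gN_add)
  qed
  have Hs: "Ht i j k = Ht j i k" if "i \<in> {1,2,3}" "j \<in> {1,2,3}" "k \<in> {1,2,3}" for i j k
  proof -
    have "Ht i j k - Ht j i k = gN (D i j - D j i + (LC (X i) (X j) - LC (X j) (X i))) (JN (X k))"
      unfolding Ht_def by (simp add: gN_add gN_diff)
    also have "\<dots> = 0" using dS[OF that] by (simp add: LC_tors)
    finally show ?thesis by simp
  qed
  have q1: "gN (LC x (X 1)) (JN (X 1)) = 0" for x using L1[OF P1 CS(1)] .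
  have q3: "gN (LC x (X 3)) (JN (X 3)) = 0" for x using L1[OF P3 CS(3)] .
  have S1: "Ht i 1 1 = 0 \<and> gN (D i 1) (JN (X 1)) = 0" if "i \<in> {1,2,3}" for i
  proof -
    have "gN (PN (D i 1)) (X 1) = gN (C *\<^sub>R D i 1 + S *\<^sub>R JN (D i 1)
          + (- 2 * S * a i) *\<^sub>R X 1 + (2 * C * a i) *\<^sub>R JN (X 1)) (X 1)" using dP1[OF that] by simp
    then have "S * gN (D i 1) (JN (X 1)) = - S * gN (D i 1) (JN (X 1))"
      using P1 fr by (simp add: lin LagR algebra_simps One_nat_def)
    then have z: "gN (D i 1) (JN (X 1)) = 0" using CS(2) by simp
    then show ?thesis unfolding Ht_def using q1 by (simp add: gN_add)
  qed
  have S2: "Ht i 1 2 = - a i" if "i \<in> {1,2,3}" for i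
  proof -
    have z1: "gN (D i 1) (JN (X 1)) = 0" using S1[OF that] by simp
    have z2: "gN (D i 1) (X 1) = 0" using dM[OF that] .
    have "gN (PN (D i 1)) (X 2) = gN (C *\<^sub>R D i 1 + S *\<^sub>R JN (D i 1)
          + (- 2 * S * a i) *\<^sub>R X 1 + (2 * C * a i) *\<^sub>R JN (X 1)) (X 2)" using dP1[OF that] by simp
    then have "S * gN (D i 1) (JN (X 2)) = - S * gN (D i 1) (JN (X 2)) - 2 * S * a i"
      using P2 fr frs z1 z2 by (simp add: lin LagR algebra_simps One_nat_def)
    then have "S * (2 * (gN (D i 1) (JN (X 2)) + a i)) = 0" by (simp add: algebra_simps)
    then have z: "gN (D i 1) (JN (X 2)) = - a i" using CS(2) by (simp add: add_eq_0_iff)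
    have "gN (LC (X i) (X 1)) (JN (X 2)) = 0"
      using L2[OF P1 P2 CS(2) q1 GNn[OF that, of 1 2]] by simp
    then show ?thesis unfolding Ht_def using z by (simp add: gN_add)
  qed
  have S3: "Ht i 3 3 = - b i" if "i \<in> {1,2,3}" for i
  proof -
    let ?q = "gN (D i 3) (JN (X 3))"
    have "gN (PN (D i 3)) (X 3) = gN (C2 *\<^sub>R D i 3 + S2 *\<^sub>R JN (D i 3)
          + (- 2 * S2 * b i) *\<^sub>R X 3 + (2 * C2 * b i) *\<^sub>R JN (X 3)) (X 3)" using dP3[OF that] by simp
    then have e1: "S2 * ?q = - S2 * ?q - 2 * S2 * b i"
      using P3 fr by (simp add: lin LagR algebra_simps One_nat_def)
    have "gN (PN (D i 3)) (JN (X 3)) = gN (C2 *\<^sub>R D i 3 + S2 *\<^sub>R JN (D i 3)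
          + (- 2 * S2 * b i) *\<^sub>R X 3 + (2 * C2 * b i) *\<^sub>R JN (X 3)) (JN (X 3))" using dP3[OF that] by simp
    then have e2: "- C2 * ?q = C2 * ?q + 2 * C2 * b i"
      using P3 fr by (simp add: lin LagR algebra_simps One_nat_def)
    have "S2 * (?q + b i) = 0" "C2 * (?q + b i) = 0" using e1 e2 by (simp_all add: algebra_simps)
    then have "?q + b i = 0" using CS(3) by (metis add.right_neutral mult_zero_left power2_eq_square zero_neq_one mult_eq_0_iff)
    then show ?thesis unfolding Ht_def using q3 by (simp add: gN_add)
  qed
  have I: "1 \<in> {1,2,3::nat}" "2 \<in> {1,2,3::nat}" "3 \<in> {1,2,3::nat}" by auto
  note H11 = Hth[OF I(1) I(1)] and H12 = Hth[OF I(1) I(2)] and H13 = Hth[OF I(1) I(3)]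
   and H21 = Hth[OF I(2) I(1)] and H22 = Hth[OF I(2) I(2)] and H23 = Hth[OF I(2) I(3)]
   and H31 = Hth[OF I(3) I(1)] and H32 = Hth[OF I(3) I(2)] and H33 = Hth[OF I(3) I(3)]
  have a1: "a 1 = 0"
    using S1[OF I(2)] Hs[OF I(2) I(1) I(1)] Hl[OF I(1) I(2) I(1)] S2[OF I(1)] by simp
  show ?thesis
  proof (intro conjI)
    show "h 1 1 1 = 0" using H11 S2[OF I(1)] a1 by simp
    show "h 1 1 2 = 0" using H11 S1[OF I(1)] by simp
    show "h 1 1 3 = 0" using H11 Hl[OF I(1) I(1) I(3)] Hs[OF I(1) I(3) I(1)] S1[OF I(3)] by simp
    show "a 1 = 0" by (rule a1)
    show "a 2 = - h 2 2 2" using H22 S2[OF I(2)] Hl[OF I(2) I(1) I(2)] by simp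
    show "a 3 = - h 1 2 3" using H12 S2[OF I(3)] Hs[OF I(3) I(1) I(2)] Hl[OF I(1) I(3) I(2)] by simp
    show "b 1 = - h 3 3 2" using H33 S3[OF I(1)] Hs[OF I(1) I(3) I(3)] Hl[OF I(3) I(1) I(3)] by simp
    show "b 2 = - h 3 3 1" using H33 S3[OF I(2)] Hs[OF I(2) I(3) I(3)] Hl[OF I(3) I(2) I(3)] by simp
    show "b 3 = - h 3 3 3" using H33 S3[OF I(3)] by simp
    show "h 3 3 1 = - 2 * h 2 2 2" using H33 H22 S3[OF I(2)] Hs[OF I(2) I(3) I(3)] Hl[OF I(3) I(2) I(3)]
      S2[OF I(2)] Hl[OF I(2) I(1) I(2)] dA[OF I(2)] by simp
    show "h 3 3 2 = 0" using H33 S3[OF I(1)] Hs[OF I(1) I(3) I(3)] Hl[OF I(3) I(1) I(3)] dA[OF I(1)] a1 by simp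
    show "h 3 3 3 = - 2 * h 1 2 3" using H33 H12 S3[OF I(3)] S2[OF I(3)] Hs[OF I(3) I(1) I(2)] Hl[OF I(1) I(3) I(2)]
      dA[OF I(3)] by simp
  qed
qed

lemma line_deriv:
  fixes g :: "'a::real_normed_vector \<Rightarrow> real"
  assumes "(g has_derivative g') (at (p + s *\<^sub>R v))"
  shows "((\<lambda>s. g (p + s *\<^sub>R v)) has_derivative (\<lambda>h. h * g' v)) (at s within S)"
proof -
  have 1: "((\<lambda>s. p + s *\<^sub>R v) has_derivative (\<lambda>h. h *\<^sub>R v)) (at s within S)"
    by (auto intro!: derivative_eq_intros)
  have l: "linear g'" using assms has_derivative_linear by blast
  show ?thesis using has_derivative_compose[OF 1 assms] by (simp add: linear_cmul[OF l])
qed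

lemma delta:
  fixes g :: "'a::real_normed_vector \<Rightarrow> real"
  assumes t: "0 < t" and reg: "\<And>s \<tau>. s \<in> {0..t} \<Longrightarrow> \<tau> \<in> {0..t} \<Longrightarrow> u + s *\<^sub>R v + \<tau> *\<^sub>R w \<in> U"
    and dg: "\<And>x. x \<in> U \<Longrightarrow> (g has_derivative g' x) (at x)"
    and dg1: "\<And>x. x \<in> U \<Longrightarrow> ((\<lambda>y. g' y v) has_derivative h2 x) (at x)"
  shows "\<exists>s\<in>{0..t}. \<exists>\<tau>\<in>{0..t}. g (u + t *\<^sub>R v + t *\<^sub>R w) - g (u + t *\<^sub>R v) - g (u + t *\<^sub>R w) + g u
          = t * t * h2 (u + s *\<^sub>R v + \<tau> *\<^sub>R w) w"
proof -
  define \<psi> where "\<psi> s = g ((u + t *\<^sub>R w) + s *\<^sub>R v) - g (u + s *\<^sub>R v)" for s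
  have in1: "(u + t *\<^sub>R w) + s *\<^sub>R v \<in> U" if "s \<in> {0..t}" for s
    using reg[OF that, of t] t by (simp add: algebra_simps)
  have in2: "u + s *\<^sub>R v \<in> U" if "s \<in> {0..t}" for s
    using reg[OF that, of 0] t by simp
  have "\<exists>\<sigma>\<in>{0..t}. \<psi> t - \<psi> 0 = (\<lambda>h. h * (g' ((u + t *\<^sub>R w) + \<sigma> *\<^sub>R v) v - g' (u + \<sigma> *\<^sub>R v) v)) (t - 0)"
  proof (rule mvt_very_simple)
    show "0 \<le> t" using t by simp
    fix s assume "0 \<le> s" "s \<le> t"
    then have s: "s \<in> {0..t}" by simp
    have a: "((\<lambda>s. g ((u + t *\<^sub>R w) + s *\<^sub>R v)) has_derivative (\<lambda>h. h * g' ((u + t *\<^sub>R w) + s *\<^sub>R v) v)) (at s within {0..t})"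
      by (rule line_deriv) (rule dg[OF in1[OF s]])
    have b: "((\<lambda>s. g (u + s *\<^sub>R v)) has_derivative (\<lambda>h. h * g' (u + s *\<^sub>R v) v)) (at s within {0..t})"
      by (rule line_deriv) (rule dg[OF in2[OF s]])
    show "(\<psi> has_derivative (\<lambda>h. h * (g' ((u + t *\<^sub>R w) + s *\<^sub>R v) v - g' (u + s *\<^sub>R v) v))) (at s within {0..t})"
      unfolding \<psi>_def using has_derivative_diff[OF a b] by (simp add: algebra_simps)
  qed
  then obtain \<sigma> where \<sigma>: "\<sigma> \<in> {0..t}" and e1: "\<psi> t - \<psi> 0 = t * (g' ((u + t *\<^sub>R w) + \<sigma> *\<^sub>R v) v - g' (u + \<sigma> *\<^sub>R v) v)"
    by auto
  define ch where "ch \<tau> = g' ((u + \<sigma> *\<^sub>R v) + \<tau> *\<^sub>R w) v" for \<tau>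
  have in3: "(u + \<sigma> *\<^sub>R v) + \<tau> *\<^sub>R w \<in> U" if "\<tau> \<in> {0..t}" for \<tau>
    using reg[OF \<sigma> that] by (simp add: algebra_simps)
  have "\<exists>\<tau>\<in>{0..t}. ch t - ch 0 = (\<lambda>h. h * h2 ((u + \<sigma> *\<^sub>R v) + \<tau> *\<^sub>R w) w) (t - 0)"
  proof (rule mvt_very_simple)
    show "0 \<le> t" using t by simp
    fix s assume "0 \<le> s" "s \<le> t"
    then have s: "s \<in> {0..t}" by simp
    show "(ch has_derivative (\<lambda>h. h * h2 ((u + \<sigma> *\<^sub>R v) + s *\<^sub>R w) w)) (at s within {0..t})"
      unfolding ch_def by (rule line_deriv[where g="\<lambda>y. g' y v"]) (rule dg1[OF in3[OF s]])
  qed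
  then obtain \<tau> where \<tau>: "\<tau> \<in> {0..t}" and e2: "ch t - ch 0 = t * h2 ((u + \<sigma> *\<^sub>R v) + \<tau> *\<^sub>R w) w"
    by auto
  have "g (u + t *\<^sub>R v + t *\<^sub>R w) - g (u + t *\<^sub>R v) - g (u + t *\<^sub>R w) + g u = \<psi> t - \<psi> 0"
    by (simp add: \<psi>_def algebra_simps)
  also have "\<dots> = t * (ch t - ch 0)" using e1 by (simp add: ch_def algebra_simps)
  also have "\<dots> = t * t * h2 (u + \<sigma> *\<^sub>R v + \<tau> *\<^sub>R w) w" using e2 by (simp add: algebra_simps)
  finally show ?thesis using \<sigma> \<tau> by blast
qed

lemma schwarz_real:
  fixes g :: "'a::real_normed_vector \<Rightarrow> real"
  assumes U: "open U" "u \<in> U"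
    and dg: "\<And>x. x \<in> U \<Longrightarrow> (g has_derivative g' x) (at x)"
    and dv: "\<And>x. x \<in> U \<Longrightarrow> ((\<lambda>y. g' y v) has_derivative hv x) (at x)"
    and dw: "\<And>x. x \<in> U \<Longrightarrow> ((\<lambda>y. g' y w) has_derivative hw x) (at x)"
    and cv: "continuous_on U (\<lambda>x. hv x w)"
    and cw: "continuous_on U (\<lambda>x. hw x v)"
  shows "hv u w = hw u v"
proof (rule ccontr)
  define A where "A = (\<lambda>x. hv x w)"
  define B where "B = (\<lambda>x. hw x v)"
  assume ne: "hv u w \<noteq> hw u v"
  define e where "e = \<bar>A u - B u\<bar> / 2"
  have e: "e > 0" using ne by (simp add: e_def A_def B_def)
  obtain r where r: "r > 0" "ball u r \<subseteq> U" using U open_contains_ball by blast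
  have "continuous (at u) A" using cv U by (simp add: A_def continuous_on_eq_continuous_at)
  then obtain d1 where d1: "d1 > 0" "\<And>x. dist x u < d1 \<Longrightarrow> dist (A x) (A u) < e"
    using e unfolding continuous_at_eps_delta by blast
  have "continuous (at u) B" using cw U by (simp add: B_def continuous_on_eq_continuous_at)
  then obtain d2 where d2: "d2 > 0" "\<And>x. dist x u < d2 \<Longrightarrow> dist (B x) (B u) < e"
    using e unfolding continuous_at_eps_delta by blast
  define m where "m = min r (min d1 d2)"
  have m: "m > 0" using r d1 d2 by (simp add: m_def)
  define t where "t = m / (2 * (norm v + norm w + 1))"
  have pos: "2 * (norm v + norm w + 1) > 0"
    using norm_ge_zero[of v] norm_ge_zero[of w] by (smt (verit))
  have t: "t > 0" using m pos unfolding t_def by (rule divide_pos_pos)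
  have small: "dist (u + s *\<^sub>R a + \<tau> *\<^sub>R b) u < m"
    if "s \<in> {0..t}" "\<tau> \<in> {0..t}" "norm a + norm b = norm v + norm w" for s \<tau> a b
  proof -
    have "dist (u + s *\<^sub>R a + \<tau> *\<^sub>R b) u = norm (s *\<^sub>R a + \<tau> *\<^sub>R b)"
      by (simp add: dist_norm)
    also have "\<dots> \<le> s * norm a + \<tau> * norm b"
      using that by (metis atLeastAtMost_iff norm_scaleR abs_of_nonneg norm_triangle_ineq)
    also have "\<dots> \<le> t * norm a + t * norm b"
      using that by (intro add_mono mult_right_mono) auto
    also have "\<dots> = t * (norm v + norm w)" using that(3) by (metis distrib_left)
    also have "\<dots> < m"
    proof -
      have "t * (norm v + norm w) \<le> t * (2 * (norm v + norm w + 1)) / 2"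
        using t by (simp add: field_simps)
      also have "\<dots> = m / 2" using pos by (simp add: t_def)
      finally show ?thesis using m by simp
    qed
    finally show ?thesis .
  qed
  have reg1: "u + s *\<^sub>R v + \<tau> *\<^sub>R w \<in> U" if "s \<in> {0..t}" "\<tau> \<in> {0..t}" for s \<tau>
    using small[OF that, of v w] r by (auto simp: m_def dist_commute subset_iff)
  have reg2: "u + s *\<^sub>R w + \<tau> *\<^sub>R v \<in> U" if "s \<in> {0..t}" "\<tau> \<in> {0..t}" for s \<tau>
    using small[OF that, of w v] r by (auto simp: m_def dist_commute subset_iff)
  obtain s1 \<tau>1 where s1: "s1 \<in> {0..t}" "\<tau>1 \<in> {0..t}" and E1:
    "g (u + t *\<^sub>R v + t *\<^sub>R w) - g (u + t *\<^sub>R v) - g (u + t *\<^sub>R w) + g u = t * t * hv (u + s1 *\<^sub>R v + \<tau>1 *\<^sub>R w) w"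
    using delta[OF t reg1 dg dv] by blast
  obtain s2 \<tau>2 where s2: "s2 \<in> {0..t}" "\<tau>2 \<in> {0..t}" and E2:
    "g (u + t *\<^sub>R w + t *\<^sub>R v) - g (u + t *\<^sub>R w) - g (u + t *\<^sub>R v) + g u = t * t * hw (u + s2 *\<^sub>R w + \<tau>2 *\<^sub>R v) v"
    using delta[OF t reg2 dg dw] by blast
  have "u + t *\<^sub>R w + t *\<^sub>R v = u + t *\<^sub>R v + t *\<^sub>R w" by (simp add: algebra_simps)
  then have c: "g (u + t *\<^sub>R w + t *\<^sub>R v) = g (u + t *\<^sub>R v + t *\<^sub>R w)" by (simp only:)
  have "t * t * hv (u + s1 *\<^sub>R v + \<tau>1 *\<^sub>R w) w = t * t * hw (u + s2 *\<^sub>R w + \<tau>2 *\<^sub>R v) v"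
    using E1 E2 c by linarith
  then have eq: "A (u + s1 *\<^sub>R v + \<tau>1 *\<^sub>R w) = B (u + s2 *\<^sub>R w + \<tau>2 *\<^sub>R v)"
    using t by (simp add: A_def B_def)
  have "dist (A (u + s1 *\<^sub>R v + \<tau>1 *\<^sub>R w)) (A u) < e"
    using d1(2) small[OF s1, of v w] by (simp add: m_def)
  moreover have "dist (B (u + s2 *\<^sub>R w + \<tau>2 *\<^sub>R v)) (B u) < e"
    using d2(2) small[OF s2, of w v] by (simp add: m_def add.commute)
  ultimately have "\<bar>A u - B u\<bar> < 2 * e" using eq by (simp add: dist_real_def)
  then show False by (simp add: e_def)
qed

lemma schwarz_vec:
  fixes f :: "'a::real_normed_vector \<Rightarrow> 'b::euclidean_space"
  assumes U: "open U" "u \<in> U"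
    and df: "\<And>x. x \<in> U \<Longrightarrow> f differentiable (at x)"
    and d1: "\<And>v x. x \<in> U \<Longrightarrow> (\<lambda>y. frechet_derivative f (at y) v) differentiable (at x)"
    and c2: "\<And>v w. continuous_on U (\<lambda>x. frechet_derivative (\<lambda>y. frechet_derivative f (at y) v) (at x) w)"
  shows "frechet_derivative (\<lambda>y. frechet_derivative f (at y) v) (at u) w =
         frechet_derivative (\<lambda>y. frechet_derivative f (at y) w) (at u) v"
proof (rule euclidean_eqI)
  fix b :: 'b assume "b \<in> Basis"
  have bl: "bounded_linear (\<lambda>z::'b. z \<bullet> b)" by (rule bounded_linear_inner_left)
  have dg: "((\<lambda>x. f x \<bullet> b) has_derivative (\<lambda>h. frechet_derivative f (at x) h \<bullet> b)) (at x)" if "x \<in> U" for x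
    using bounded_linear.has_derivative[OF bl, OF df[OF that, unfolded frechet_derivative_works]] .
  have dd: "((\<lambda>y. frechet_derivative f (at y) z \<bullet> b) has_derivative
      (\<lambda>k. frechet_derivative (\<lambda>y. frechet_derivative f (at y) z) (at x) k \<bullet> b)) (at x)" if "x \<in> U" for x z
    using bounded_linear.has_derivative[OF bl, OF d1[OF that, unfolded frechet_derivative_works]] .
  have cc: "continuous_on U (\<lambda>x. frechet_derivative (\<lambda>y. frechet_derivative f (at y) z) (at x) k \<bullet> b)" for z k
    using c2[of z k] by (intro continuous_intros)
  show "frechet_derivative (\<lambda>y. frechet_derivative f (at y) v) (at u) w \<bullet> b =
        frechet_derivative (\<lambda>y. frechet_derivative f (at y) w) (at u) v \<bullet> b"
    by (rule schwarz_real[where g="\<lambda>x. f x \<bullet> b", OF U dg dd dd cc cc])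
qed

lemma Ck_smooth: "smooth_on f U \<Longrightarrow> Ck n f U" by (simp add: smooth_on_def)
lemma Ck_diff: "Ck (Suc n) f U \<Longrightarrow> x \<in> U \<Longrightarrow> f differentiable (at x)" by simp
lemma Ck_der: "Ck (Suc n) f U \<Longrightarrow> Ck n (\<lambda>x. frechet_derivative f (at x) v) U" by simp
lemma Ck_cont: "Ck n f U \<Longrightarrow> continuous_on U f" by (cases n) auto

lemma deriv_const_zero:
  assumes "open U" "u \<in> U" "\<And>x. x \<in> U \<Longrightarrow> \<phi> x = k" "(\<phi> has_derivative \<phi>') (at u)"
  shows "\<phi>' v = 0"
proof -
  have "(\<phi> has_derivative (\<lambda>h. 0)) (at u)"
    by (rule has_derivative_transform_within_open[of "\<lambda>x. k" _ _ _ U]) (use assms in auto)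
  then have "\<phi>' = (\<lambda>h. 0)" using assms(4) has_derivative_unique by blast
  then show ?thesis by simp
qed

lemma lin_sym_sum:
  fixes L :: "'a::euclidean_space \<Rightarrow> 'a \<Rightarrow> 'b::real_vector"
  assumes lin: "\<And>b. b \<in> Basis \<Longrightarrow> linear (L b)" and sym: "\<And>b c. b \<in> Basis \<Longrightarrow> c \<in> Basis \<Longrightarrow> L b c = L c b"
  shows "(\<Sum>b\<in>Basis. (x \<bullet> b) *\<^sub>R L b y) = (\<Sum>b\<in>Basis. (y \<bullet> b) *\<^sub>R L b x)"
proof -
  have ex: "L b z = (\<Sum>c\<in>Basis. (z \<bullet> c) *\<^sub>R L b c)" if "b \<in> Basis" for b z
  proof -
    have "L b z = L b (\<Sum>c\<in>Basis. (z \<bullet> c) *\<^sub>R c)" by (simp add: euclidean_representation)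
    also have "\<dots> = (\<Sum>c\<in>Basis. (z \<bullet> c) *\<^sub>R L b c)"
      by (simp add: linear_sum[OF lin[OF that]] linear_scale[OF lin[OF that]])
    finally show ?thesis .
  qed
  have "(\<Sum>b\<in>Basis. (x \<bullet> b) *\<^sub>R L b y) = (\<Sum>b\<in>Basis. \<Sum>c\<in>Basis. ((x \<bullet> b) * (y \<bullet> c)) *\<^sub>R L b c)"
    by (rule sum.cong[OF refl]) (simp only: ex[of _ y] scaleR_sum_right scaleR_scaleR)
  also have "\<dots> = (\<Sum>c\<in>Basis. \<Sum>b\<in>Basis. ((x \<bullet> b) * (y \<bullet> c)) *\<^sub>R L b c)" by (rule sum.swap)
  also have "\<dots> = (\<Sum>c\<in>Basis. \<Sum>b\<in>Basis. ((y \<bullet> c) * (x \<bullet> b)) *\<^sub>R L c b)"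
    by (intro sum.cong refl) (simp add: sym mult.commute)
  also have "\<dots> = (\<Sum>b\<in>Basis. (y \<bullet> b) *\<^sub>R L b x)"
    by (rule sum.cong[OF refl]) (simp only: ex[of _ x] scaleR_sum_right scaleR_scaleR)
  finally show ?thesis .
qed

definition adj2 :: "m2 \<Rightarrow> m2" where "adj2 m = mk2 (m$2$2) (- m$1$2) (- m$2$1) (m$1$1)"

lemma mat1_2: "(mat 1 :: m2) = mk2 1 0 0 1"
  by (simp add: vec_eq_iff forall_2 mat_def)

lemma adj2_inv:
  assumes "det m = 1"
  shows "m ** adj2 m = mat 1" "adj2 m ** m = mat 1"
  using assms by (simp_all add: mat1_2 adj2_def vec_eq_iff forall_2 matrix_matrix_mult_def sum_2 det_2 algebra_simps)

lemma inv_adj2: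
  assumes "det m = 1"
  shows "matrix_inv m = adj2 m"
proof -
  have ex: "\<exists>B::m2. m ** B = mat 1 \<and> B ** m = mat 1" using adj2_inv[OF assms] by blast
  have i: "m ** matrix_inv m = mat 1 \<and> matrix_inv m ** m = mat 1"
    unfolding matrix_inv_def by (rule someI_ex[OF ex])
  have "matrix_inv m = matrix_inv m ** (m ** adj2 m)" using adj2_inv[OF assms] by simp
  also have "\<dots> = (matrix_inv m ** m) ** adj2 m" by (simp add: matrix_mul_assoc)
  also have "\<dots> = adj2 m" using i by simp
  finally show ?thesis .
qed

lemma adj2_tangent:
  assumes "det a = 1" "trace (adj2 a ** v) = 0"
  shows "adj2 v = - (adj2 a ** v ** adj2 a)"
  using assms by (simp add: adj2_def vec_eq_iff forall_2 matrix_matrix_mult_def sum_2 det_2 trace_def) algebra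

lemma bl_adj2: "bounded_linear adj2"
proof -
  have "linear adj2"
    by (rule linearI) (simp_all add: adj2_def vec_eq_iff forall_2)
  then show ?thesis using linear_conv_bounded_linear by blast
qed

lemma bb_mm: "bounded_bilinear (\<lambda>a b::m2. a ** b)"
proof -
  have "bilinear (\<lambda>a b::m2. a ** b)"
    unfolding bilinear_def
    by (auto intro!: linearI simp: vec_eq_iff forall_2 matrix_matrix_mult_def sum_2 algebra_simps)
  then show ?thesis using bilinear_conv_bounded_bilinear by blast
qed

lemma bl_fst: "bounded_linear (fst :: pt \<Rightarrow> m2)" by (rule bounded_linear_fst)
lemma bl_snd: "bounded_linear (snd :: pt \<Rightarrow> m2)" by (rule bounded_linear_snd)

lemma JN_sl2: "x \<in> sl2 \<times> sl2 \<Longrightarrow> JN x \<in> sl2 \<times> sl2"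
  by (cases x) (simp add: JN_def sl2_def trace_sub trace_scaleR)

lemma bl_JN: "bounded_linear JN"
proof -
  have "linear JN" by (rule linearI) (simp_all add: JN_add JN_scale)
  then show ?thesis using linear_conv_bounded_linear by blast
qed
lemma bl_PN: "bounded_linear PN"
proof -
  have "linear PN" by (rule linearI) (simp_all add: PN_add PN_scale)
  then show ?thesis using linear_conv_bounded_linear by blast
qed
lemma bb_gN: "bounded_bilinear gN"
proof -
  have l1: "linear (gN x)" for x by (rule linearI) (simp_all add: gN_add2 gN_scale2)
  have l2: "linear (\<lambda>y. gN y x)" for x by (rule linearI) (simp_all add: gN_add gN_scale)
  have "bilinear gN" using l1 l2 by (simp add: bilinear_def)
  then show ?thesis using bilinear_conv_bounded_bilinear by blast
qed

lemma Y_deriv: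
  fixes F :: "crd \<Rightarrow> pt" and e :: "crd \<Rightarrow> crd"
  assumes U: "open U" "u \<in> U"
    and FN: "\<And>x. x \<in> U \<Longrightarrow> F x \<in> SL2 \<times> SL2"
    and dF: "\<And>x. x \<in> U \<Longrightarrow> F differentiable (at x)"
    and d2: "\<And>b. (\<lambda>x. frechet_derivative F (at x) b) differentiable (at u)"
    and de: "e differentiable (at u)"
  shows "((\<lambda>x. tanF F x (e x)) has_derivative (\<lambda>w. let
      W = frechet_derivative F (at u) (frechet_derivative e (at u) w) +
          (\<Sum>b\<in>Basis. (e u \<bullet> b) *\<^sub>R frechet_derivative (\<lambda>x. frechet_derivative F (at x) b) (at u) w) in
     (adj2 (fst (frechet_derivative F (at u) w)) ** fst (frechet_derivative F (at u) (e u)) +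
      adj2 (fst (F u)) ** fst W,
      adj2 (snd (frechet_derivative F (at u) w)) ** snd (frechet_derivative F (at u) (e u)) +
      adj2 (snd (F u)) ** snd W))) (at u)"
proof -
  define dF' where "dF' x = frechet_derivative F (at x)" for x
  define F2 where "F2 b = frechet_derivative (\<lambda>x. frechet_derivative F (at x) b) (at u)" for b
  define e' where "e' = frechet_derivative e (at u)"
  define V where "V x = (\<Sum>b\<in>Basis. (e x \<bullet> b) *\<^sub>R dF' x b)" for x
  have lin: "linear (dF' x)" if "x \<in> U" for x
    using dF[OF that] by (simp add: dF'_def linear_frechet_derivative)
  have rep: "dF' x z = (\<Sum>b\<in>Basis. (z \<bullet> b) *\<^sub>R dF' x b)" if "x \<in> U" for x z
  proof -
    have "dF' x z = dF' x (\<Sum>b\<in>Basis. (z \<bullet> b) *\<^sub>R b)" by (simp add: euclidean_representation)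
    also have "\<dots> = (\<Sum>b\<in>Basis. (z \<bullet> b) *\<^sub>R dF' x b)"
      by (simp add: linear_sum[OF lin[OF that]] linear_scale[OF lin[OF that]])
    finally show ?thesis .
  qed
  have Teq: "tanF F x (e x) = (adj2 (fst (F x)) ** fst (V x), adj2 (snd (F x)) ** snd (V x))" if "x \<in> U" for x
  proof -
    have "det (fst (F x)) = 1" "det (snd (F x)) = 1" using FN[OF that] by (auto simp: SL2_def)
    then show ?thesis using rep[OF that, of "e x"]
      by (simp add: tanF_def ltriv_def inv_adj2 V_def dF'_def)
  qed
  have Fd: "(F has_derivative dF' u) (at u)" using dF[OF U(2)] by (simp add: dF'_def frechet_derivative_works)
  have ed: "(e has_derivative e') (at u)" using de by (simp add: e'_def frechet_derivative_works)
  have F2d: "((\<lambda>x. dF' x b) has_derivative F2 b) (at u)" for b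
    using d2[of b] by (simp add: dF'_def F2_def frechet_derivative_works)
  have ebd: "((\<lambda>x. e x \<bullet> b) has_derivative (\<lambda>h. e' h \<bullet> b)) (at u)" for b
    using bounded_linear.has_derivative[OF bounded_linear_inner_left ed] .
  have Vd: "(V has_derivative (\<lambda>w. \<Sum>b\<in>Basis. (e u \<bullet> b) *\<^sub>R F2 b w + (e' w \<bullet> b) *\<^sub>R dF' u b)) (at u)"
    unfolding V_def by (intro has_derivative_sum has_derivative_scaleR ebd F2d)
  have Vd': "(V has_derivative (\<lambda>w. dF' u (e' w) + (\<Sum>b\<in>Basis. (e u \<bullet> b) *\<^sub>R F2 b w))) (at u)"
  proof -
    have r2: "(\<Sum>b\<in>Basis. (e' w \<bullet> b) *\<^sub>R dF' u b) = dF' u (e' w)" for w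
      by (rule rep[OF U(2), symmetric])
    show ?thesis using Vd by (rule has_derivative_eq_rhs) (simp add: fun_eq_iff sum.distrib r2 add.commute)
  qed
  have M1: "((\<lambda>x. adj2 (fst (F x))) has_derivative (\<lambda>w. adj2 (fst (dF' u w)))) (at u)"
    by (rule bounded_linear.has_derivative[OF bl_adj2]) (rule bounded_linear.has_derivative[OF bl_fst Fd])
  have M2: "((\<lambda>x. adj2 (snd (F x))) has_derivative (\<lambda>w. adj2 (snd (dF' u w)))) (at u)"
    by (rule bounded_linear.has_derivative[OF bl_adj2]) (rule bounded_linear.has_derivative[OF bl_snd Fd])
  have N1: "((\<lambda>x. fst (V x)) has_derivative (\<lambda>w. fst (dF' u (e' w) + (\<Sum>b\<in>Basis. (e u \<bullet> b) *\<^sub>R F2 b w)))) (at u)"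
    by (rule bounded_linear.has_derivative[OF bl_fst Vd'])
  have N2: "((\<lambda>x. snd (V x)) has_derivative (\<lambda>w. snd (dF' u (e' w) + (\<Sum>b\<in>Basis. (e u \<bullet> b) *\<^sub>R F2 b w)))) (at u)"
    by (rule bounded_linear.has_derivative[OF bl_snd Vd'])
  have P: "((\<lambda>x. (adj2 (fst (F x)) ** fst (V x), adj2 (snd (F x)) ** snd (V x))) has_derivative
     (\<lambda>w. (adj2 (fst (F u)) ** fst (dF' u (e' w) + (\<Sum>b\<in>Basis. (e u \<bullet> b) *\<^sub>R F2 b w)) + adj2 (fst (dF' u w)) ** fst (V u),
           adj2 (snd (F u)) ** snd (dF' u (e' w) + (\<Sum>b\<in>Basis. (e u \<bullet> b) *\<^sub>R F2 b w)) + adj2 (snd (dF' u w)) ** snd (V u)))) (at u)"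
    by (intro has_derivative_Pair bounded_bilinear.FDERIV[OF bb_mm] M1 M2 N1 N2)
  have P2: "((\<lambda>x. tanF F x (e x)) has_derivative
     (\<lambda>w. (adj2 (fst (F u)) ** fst (dF' u (e' w) + (\<Sum>b\<in>Basis. (e u \<bullet> b) *\<^sub>R F2 b w)) + adj2 (fst (dF' u w)) ** fst (V u),
           adj2 (snd (F u)) ** snd (dF' u (e' w) + (\<Sum>b\<in>Basis. (e u \<bullet> b) *\<^sub>R F2 b w)) + adj2 (snd (dF' u w)) ** snd (V u)))) (at u)"
    by (rule has_derivative_transform_within_open[OF P U]) (simp add: Teq)
  have VU: "V u = dF' u (e u)" unfolding V_def by (rule rep[OF U(2), symmetric])
  show ?thesis
    using P2 by (rule has_derivative_eq_rhs) (simp add: fun_eq_iff VU dF'_def F2_def e'_def Let_def add.commute)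
qed

lemma tanF_lin:
  assumes "F differentiable (at x)"
  shows "linear (tanF F x)"
proof -
  have l: "linear (frechet_derivative F (at x))" using assms by (rule linear_frechet_derivative)
  have l2: "linear (\<lambda>V::pt. (M ** fst V, N ** snd V))" for M N :: m2
    by (rule linearI) (simp_all add: vec_eq_iff matrix_matrix_mult_def sum_2 algebra_simps)
  have "tanF F x = (\<lambda>V. (matrix_inv (fst (F x)) ** fst V, matrix_inv (snd (F x)) ** snd V)) \<circ> frechet_derivative F (at x)"
    by (simp add: fun_eq_iff tanF_def ltriv_def)
  then show ?thesis using linear_compose[OF l l2] by simp
qed

lemma bracket_id:
  fixes a Mi Mj Wi Wj :: m2
  assumes "det a = 1" "trace (adj2 a ** Mi) = 0" "trace (adj2 a ** Mj) = 0"
  shows "(adj2 Mi ** Mj + adj2 a ** Wi) - (adj2 Mj ** Mi + adj2 a ** Wj) +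
         ((adj2 a ** Mi) ** (adj2 a ** Mj) - (adj2 a ** Mj) ** (adj2 a ** Mi)) = adj2 a ** (Wi - Wj)"
proof -
  have i: "adj2 Mi = - (adj2 a ** Mi ** adj2 a)" "adj2 Mj = - (adj2 a ** Mj ** adj2 a)"
    using adj2_tangent assms by blast+
  show ?thesis unfolding i
    by (simp add: vec_eq_iff forall_2 matrix_matrix_mult_def sum_2 algebra_simps)
qed

lemma loc_const_angle:
  fixes f :: "crd \<Rightarrow> real"
  assumes U: "open U" "u \<in> U" and c: "continuous_on U f" and k: "\<And>x. x \<in> U \<Longrightarrow> \<exists>k::int. f x = of_int k * pi"
  shows "\<exists>V. open V \<and> u \<in> V \<and> (\<forall>x\<in>V. f x = f u)"
proof -
  have "continuous (at u) f" using c U by (simp add: continuous_on_eq_continuous_at)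
  then obtain d where d: "d > 0" "\<And>x. dist x u < d \<Longrightarrow> dist (f x) (f u) < pi"
    unfolding continuous_at_eps_delta using pi_gt_zero by blast
  obtain ku where ku: "f u = of_int ku * pi" using k[OF U(2)] by blast
  have "f x = f u" if "x \<in> U \<inter> ball u d" for x
  proof -
    have "x \<in> U" using that by simp
    then obtain kx where kx: "f x = of_int kx * pi" using k by blast
    have "\<bar>of_int kx * pi - of_int ku * pi\<bar> < pi" using d(2)[of x] that kx ku by (simp add: dist_real_def dist_commute)
    then have "\<bar>of_int (kx - ku)\<bar> * pi < 1 * pi" by (simp add: left_diff_distrib[symmetric] abs_mult)
    then have "\<bar>of_int (kx - ku)\<bar> < (1::real)" using pi_gt_zero by (simp only: mult_less_cancel_right)
    then have "kx = ku" by linarith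
    then show ?thesis using kx ku by simp
  qed
  moreover have "open (U \<inter> ball u d)" using U by auto
  moreover have "u \<in> U \<inter> ball u d" using U d by auto
  ultimately show ?thesis by blast
qed

theorem mainTheorem5:
  fixes F :: "crd \<Rightarrow> pt" and U :: "crd set"
    and E :: "nat \<Rightarrow> crd \<Rightarrow> crd"
    and \<theta>1 \<theta>2 :: "crd \<Rightarrow> real"
    and A B :: "crd \<Rightarrow> crd \<Rightarrow> crd"
    and c h :: "nat \<Rightarrow> nat \<Rightarrow> nat \<Rightarrow> crd \<Rightarrow> real"
  assumes U_open: "open U"
    and F_smooth: "smooth_on F U"
    and F_in_N: "\<forall>u\<in>U. F u \<in> SL2 \<times> SL2"
    and immersion: "\<forall>u\<in>U. inj (frechet_derivative F (at u))"
    and nondeg: "\<forall>u\<in>U. \<forall>v. (\<forall>w. gN (tanF F u v) (tanF F u w) = 0) \<longrightarrow> v = 0"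
    and Lagrangian: "\<forall>u\<in>U. JN ` range (tanF F u) =
                        {z \<in> sl2 \<times> sl2. \<forall>w. gN z (tanF F u w) = 0}"
    and AB: "\<forall>u\<in>U. linear (A u) \<and> linear (B u) \<and>
               (\<forall>v. PN (tanF F u v) = tanF F u (A u v) + JN (tanF F u (B u v)))"
    and E_smooth: "\<forall>i\<in>{1,2,3}. smooth_on (E i) U"
    and frame: "\<forall>u\<in>U.
        gN (tanF F u (E 1 u)) (tanF F u (E 1 u)) = 0 \<and>
        gN (tanF F u (E 2 u)) (tanF F u (E 2 u)) = 0 \<and>
        gN (tanF F u (E 1 u)) (tanF F u (E 2 u)) = 1 \<and>
        gN (tanF F u (E 3 u)) (tanF F u (E 3 u)) = 1 \<and>
        gN (tanF F u (E 1 u)) (tanF F u (E 3 u)) = 0 \<and>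
        gN (tanF F u (E 2 u)) (tanF F u (E 3 u)) = 0"
    and normalized: "\<forall>u\<in>U. JN (GN (tanF F u (E 1 u)) (tanF F u (E 2 u)))
                               = sqrt (2/3) *\<^sub>R tanF F u (E 3 u)"
    and theta_smooth: "smooth_on \<theta>1 U" "smooth_on \<theta>2 U"
    and typeII_A: "\<forall>u\<in>U.
        A u (E 1 u) = cos (2 * \<theta>1 u) *\<^sub>R E 1 u \<and>
        A u (E 2 u) = E 1 u + cos (2 * \<theta>1 u) *\<^sub>R E 2 u \<and>
        A u (E 3 u) = cos (2 * \<theta>2 u) *\<^sub>R E 3 u"
    and typeII_B: "\<forall>u\<in>U.
        B u (E 1 u) = sin (2 * \<theta>1 u) *\<^sub>R E 1 u \<and>
        B u (E 2 u) = - cot (2 * \<theta>1 u) *\<^sub>R E 1 u + sin (2 * \<theta>1 u) *\<^sub>R E 2 u \<and>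
        B u (E 3 u) = sin (2 * \<theta>2 u) *\<^sub>R E 3 u"
    and angles: "\<forall>u\<in>U. (\<exists>k::int. 2 * \<theta>1 u + \<theta>2 u = of_int k * pi) \<and>
                        (\<forall>k::int. \<theta>1 u \<noteq> of_int k * pi / 2)"
    and gauss: "\<forall>u\<in>U. \<forall>i\<in>{1,2,3}. \<forall>j\<in>{1,2,3}.
        covD F (\<lambda>x. tanF F x (E j x)) u (E i u) =
          (\<Sum>k\<in>{1,2,3}. c i j k u *\<^sub>R tanF F u (E k u)) +
          (\<Sum>k\<in>{1,2,3}. h i j k u *\<^sub>R JN (tanF F u (E k u)))"
  shows "\<forall>u\<in>U.
      h 1 1 1 u = 0 \<and> h 1 1 2 u = 0 \<and> h 1 1 3 u = 0 \<and>
      frechet_derivative \<theta>1 (at u) (E 1 u) = 0 \<and>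
      frechet_derivative \<theta>1 (at u) (E 2 u) = - h 2 2 2 u \<and>
      frechet_derivative \<theta>1 (at u) (E 3 u) = - h 1 2 3 u \<and>
      frechet_derivative \<theta>2 (at u) (E 1 u) = - h 3 3 2 u \<and>
      frechet_derivative \<theta>2 (at u) (E 2 u) = - h 3 3 1 u \<and>
      frechet_derivative \<theta>2 (at u) (E 3 u) = - h 3 3 3 u \<and>
      h 3 3 1 u = - 2 * h 2 2 2 u \<and> h 3 3 2 u = 0 \<and> h 3 3 3 u = - 2 * h 1 2 3 u"
proof (intro ballI)
  fix u assume u: "u \<in> U"
  have Ck3: "Ck (Suc (Suc (Suc 0))) F U" using Ck_smooth[OF F_smooth] .
  have dFx: "F differentiable (at x)" if "x \<in> U" for x using Ck3 that by simp
  have d2x: "(\<lambda>y. frechet_derivative F (at y) v) differentiable (at x)" if "x \<in> U" for v x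
    using Ck3 that by simp
  have c2: "continuous_on U (\<lambda>x. frechet_derivative (\<lambda>y. frechet_derivative F (at y) v) (at x) w)" for v w
    using Ck3 by simp
  have sym2: "frechet_derivative (\<lambda>y. frechet_derivative F (at y) v) (at u) w =
         frechet_derivative (\<lambda>y. frechet_derivative F (at y) w) (at u) v" for v w
    by (rule schwarz_vec[OF U_open u dFx d2x c2])
  have dE: "E i differentiable (at u)" if "i \<in> {1,2,3}" for i
  proof -
    have "Ck (Suc 0) (E i) U" using Ck_smooth E_smooth that by blast
    then show ?thesis using u by simp
  qed
  have Ck1a: "Ck (Suc 0) \<theta>1 U" "Ck (Suc 0) \<theta>2 U" using Ck_smooth theta_smooth by blast+
  have dth1: "(\<theta>1 has_derivative frechet_derivative \<theta>1 (at u)) (at u)"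
    using Ck1a(1) u by (simp add: frechet_derivative_works)
  have dth2: "(\<theta>2 has_derivative frechet_derivative \<theta>2 (at u)) (at u)"
    using Ck1a(2) u by (simp add: frechet_derivative_works)
  have cth: "continuous_on U \<theta>1" "continuous_on U \<theta>2" using Ck1a by simp_all
  have tlin: "linear (tanF F x)" if "x \<in> U" for x by (rule tanF_lin[OF dFx[OF that]])
  have LagU: "gN (JN (tanF F x v)) (tanF F x w) = 0" if "x \<in> U" for x v w
  proof -
    have "JN (tanF F x v) \<in> JN ` range (tanF F x)" by blast
    then show ?thesis using Lagrangian that by blast
  qed
  have sl2U: "tanF F u v \<in> sl2 \<times> sl2" for v
  proof -
    have "JN (tanF F u v) \<in> JN ` range (tanF F u)" by blast
    then have "JN (tanF F u v) \<in> sl2 \<times> sl2" using Lagrangian u by blast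
    then have "JN (JN (tanF F u v)) \<in> sl2 \<times> sl2" by (rule JN_sl2)
    then have m: "- tanF F u v \<in> sl2 \<times> sl2" by (simp add: JN_JN)
    then show ?thesis by (cases "tanF F u v") (simp add: sl2_def trace_def sum_2)
  qed
  define Y where "Y j = (\<lambda>x. tanF F x (E j x))" for j
  define X where "X j = Y j u" for j
  define D where "D i j = frechet_derivative (Y j) (at u) (E i u)" for i j
  define a where "a i = frechet_derivative \<theta>1 (at u) (E i u)" for i
  define b where "b i = frechet_derivative \<theta>2 (at u) (E i u)" for i
  define C where "C = cos (2 * \<theta>1 u)"
  define S where "S = sin (2 * \<theta>1 u)"
  define C2 where "C2 = cos (2 * \<theta>2 u)"
  define S2 where "S2 = sin (2 * \<theta>2 u)"
  define ct where "ct = cot (2 * \<theta>1 u)"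
  define dF' where "dF' = frechet_derivative F (at u)"
  define F2 where "F2 v = frechet_derivative (\<lambda>x. frechet_derivative F (at x) v) (at u)" for v
  define e' where "e' j = frechet_derivative (E j) (at u)" for j
  have d2u: "(\<lambda>x. frechet_derivative F (at x) v) differentiable (at u)" for v using d2x[OF u] .
  have Yd: "(Y j has_derivative (\<lambda>w. let
      W = dF' (e' j w) + (\<Sum>v\<in>Basis. (E j u \<bullet> v) *\<^sub>R F2 v w) in
     (adj2 (fst (dF' w)) ** fst (dF' (E j u)) + adj2 (fst (F u)) ** fst W,
      adj2 (snd (dF' w)) ** snd (dF' (E j u)) + adj2 (snd (F u)) ** snd W))) (at u)"
    if "j \<in> {1,2,3}" for j
    unfolding Y_def dF'_def F2_def e'_def
    by (rule Y_deriv[OF U_open u _ dFx d2u dE[OF that]]) (use F_in_N in blast)+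
  have Dform: "D i j = (let
      W = dF' (e' j (E i u)) + (\<Sum>v\<in>Basis. (E j u \<bullet> v) *\<^sub>R F2 v (E i u)) in
     (adj2 (fst (dF' (E i u))) ** fst (dF' (E j u)) + adj2 (fst (F u)) ** fst W,
      adj2 (snd (dF' (E i u))) ** snd (dF' (E j u)) + adj2 (snd (F u)) ** snd W))"
    if "j \<in> {1,2,3}" for i j
    unfolding D_def frechet_derivative_at[OF Yd[OF that], symmetric] by (simp add: Let_def)
  have Ydf: "(Y j has_derivative frechet_derivative (Y j) (at u)) (at u)" if "j \<in> {1,2,3}" for j
  proof -
    have "Y j differentiable (at u)" using Yd[OF that] unfolding differentiable_def by blast
    then show ?thesis by (simp add: frechet_derivative_works)
  qed
  have I3: "1 \<in> {1,2,3::nat}" "2 \<in> {1,2,3::nat}" "3 \<in> {1,2,3::nat}" by auto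
  have Lag: "gN (JN (X j)) (X k) = 0" for j k using LagU[OF u] by (simp add: X_def Y_def)
  have fr: "gN (X 1) (X 1) = 0" "gN (X 2) (X 2) = 0" "gN (X 1) (X 2) = 1"
       "gN (X 3) (X 3) = 1" "gN (X 1) (X 3) = 0" "gN (X 2) (X 3) = 0"
    using frame[rule_format, OF u] by (simp_all add: X_def Y_def)
  have nrm: "JN (GN (X 1) (X 2)) = sqrt (2/3) *\<^sub>R X 3" using normalized[rule_format, OF u] by (simp add: X_def Y_def)
  note tl = tlin[OF u]
  have ABu: "PN (tanF F u v) = tanF F u (A u v) + JN (tanF F u (B u v))" for v using AB u by blast
  have P1: "PN (X 1) = C *\<^sub>R X 1 + S *\<^sub>R JN (X 1)"
    using ABu[of "E 1 u"] typeII_A[rule_format, OF u] typeII_B[rule_format, OF u]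
    by (simp add: X_def Y_def C_def S_def linear_scale[OF tl] JN_scale)
  have P2: "PN (X 2) = X 1 + C *\<^sub>R X 2 + JN ((- ct) *\<^sub>R X 1 + S *\<^sub>R X 2)"
    using ABu[of "E 2 u"] typeII_A[rule_format, OF u] typeII_B[rule_format, OF u]
    by (simp add: X_def Y_def C_def S_def ct_def linear_scale[OF tl] linear_add[OF tl] linear_diff[OF tl] add.assoc)
  have P3: "PN (X 3) = C2 *\<^sub>R X 3 + S2 *\<^sub>R JN (X 3)"
    using ABu[of "E 3 u"] typeII_A[rule_format, OF u] typeII_B[rule_format, OF u]
    by (simp add: X_def Y_def C2_def S2_def linear_scale[OF tl] JN_scale)
  have CS1: "C^2 + S^2 = 1" by (simp add: C_def S_def add.commute)
  have CS3: "C2^2 + S2^2 = 1" by (simp add: C2_def S2_def add.commute)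
  have CS2: "S \<noteq> 0"
  proof
    assume "S = 0"
    then obtain n :: int where "2 * \<theta>1 u = of_int n * pi" unfolding S_def sin_zero_iff_int2 by blast
    then have "\<theta>1 u = of_int n * pi / 2" by simp
    then show False using angles[rule_format, OF u] by blast
  qed
  have gss: "D i j + LC (X i) (X j) =
          (\<Sum>k\<in>{1,2,3}. c i j k u *\<^sub>R X k) + (\<Sum>k\<in>{1,2,3}. h i j k u *\<^sub>R JN (X k))"
    if "i \<in> {1,2,3}" "j \<in> {1,2,3}" for i j
    using gauss[rule_format, OF u that] by (simp add: covD_def D_def X_def Y_def)
  have th1d: "((\<lambda>x. 2 * \<theta>1 x) has_derivative (\<lambda>w. 2 * frechet_derivative \<theta>1 (at u) w)) (at u)"
    by (rule has_derivative_mult_right[OF dth1])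
  have th2d: "((\<lambda>x. 2 * \<theta>2 x) has_derivative (\<lambda>w. 2 * frechet_derivative \<theta>2 (at u) w)) (at u)"
    by (rule has_derivative_mult_right[OF dth2])
  have dPgen: "PN (D i j) = cos (2 * \<theta> u) *\<^sub>R D i j + sin (2 * \<theta> u) *\<^sub>R JN (D i j)
          + (- 2 * sin (2 * \<theta> u) * frechet_derivative \<theta> (at u) (E i u)) *\<^sub>R X j
          + (2 * cos (2 * \<theta> u) * frechet_derivative \<theta> (at u) (E i u)) *\<^sub>R JN (X j)"
    if j: "j \<in> {1,2,3}" and thd: "((\<lambda>x. 2 * \<theta> x) has_derivative (\<lambda>w. 2 * frechet_derivative \<theta> (at u) w)) (at u)"
      and rel: "\<And>x. x \<in> U \<Longrightarrow> PN (Y j x) = cos (2 * \<theta> x) *\<^sub>R Y j x + sin (2 * \<theta> x) *\<^sub>R JN (Y j x)"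
    for i j \<theta>
  proof -
    define Y' where "Y' = frechet_derivative (Y j) (at u)"
    define t' where "t' = frechet_derivative \<theta> (at u)"
    have yd: "(Y j has_derivative Y') (at u)" using Ydf[OF j] by (simp add: Y'_def)
    have cd: "((\<lambda>x. cos (2 * \<theta> x)) has_derivative (\<lambda>w. 2 * t' w * - sin (2 * \<theta> u))) (at u)"
      using DERIV_cos[THEN DERIV_compose_FDERIV, OF thd[unfolded t'_def[symmetric]]] by simp
    have sd: "((\<lambda>x. sin (2 * \<theta> x)) has_derivative (\<lambda>w. 2 * t' w * cos (2 * \<theta> u))) (at u)"
      using DERIV_sin[THEN DERIV_compose_FDERIV, OF thd[unfolded t'_def[symmetric]]] by simp
    have pd: "((\<lambda>x. PN (Y j x)) has_derivative (\<lambda>w. PN (Y' w))) (at u)"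
      by (rule bounded_linear.has_derivative[OF bl_PN yd])
    have jd: "((\<lambda>x. JN (Y j x)) has_derivative (\<lambda>w. JN (Y' w))) (at u)"
      by (rule bounded_linear.has_derivative[OF bl_JN yd])
    have phd: "((\<lambda>x. PN (Y j x) - (cos (2 * \<theta> x) *\<^sub>R Y j x + sin (2 * \<theta> x) *\<^sub>R JN (Y j x))) has_derivative
       (\<lambda>w. PN (Y' w) - ((cos (2 * \<theta> u) *\<^sub>R Y' w + (2 * t' w * - sin (2 * \<theta> u)) *\<^sub>R Y j u) +
            (sin (2 * \<theta> u) *\<^sub>R JN (Y' w) + (2 * t' w * cos (2 * \<theta> u)) *\<^sub>R JN (Y j u))))) (at u)"
      by (intro has_derivative_diff has_derivative_add has_derivative_scaleR pd jd yd cd sd)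
    have "PN (Y' (E i u)) - ((cos (2 * \<theta> u) *\<^sub>R Y' (E i u) + (2 * t' (E i u) * - sin (2 * \<theta> u)) *\<^sub>R Y j u) +
            (sin (2 * \<theta> u) *\<^sub>R JN (Y' (E i u)) + (2 * t' (E i u) * cos (2 * \<theta> u)) *\<^sub>R JN (Y j u))) = 0"
      by (rule deriv_const_zero[OF U_open u _ phd]) (simp add: rel)
    then show ?thesis by (simp add: D_def X_def Y'_def t'_def algebra_simps)
  qed
  have rel1: "PN (Y 1 x) = cos (2 * \<theta>1 x) *\<^sub>R Y 1 x + sin (2 * \<theta>1 x) *\<^sub>R JN (Y 1 x)" if "x \<in> U" for x
    using AB[rule_format, OF that] typeII_A[rule_format, OF that] typeII_B[rule_format, OF that]
    by (simp add: Y_def linear_scale[OF tlin[OF that]] JN_scale)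
  have rel3: "PN (Y 3 x) = cos (2 * \<theta>2 x) *\<^sub>R Y 3 x + sin (2 * \<theta>2 x) *\<^sub>R JN (Y 3 x)" if "x \<in> U" for x
    using AB[rule_format, OF that] typeII_A[rule_format, OF that] typeII_B[rule_format, OF that]
    by (simp add: Y_def linear_scale[OF tlin[OF that]] JN_scale)
  have dP1: "PN (D i 1) = C *\<^sub>R D i 1 + S *\<^sub>R JN (D i 1)
          + (- 2 * S * a i) *\<^sub>R X 1 + (2 * C * a i) *\<^sub>R JN (X 1)" for i
    using dPgen[OF I3(1) th1d rel1, of i] by (simp add: C_def S_def a_def)
  have dP3: "PN (D i 3) = C2 *\<^sub>R D i 3 + S2 *\<^sub>R JN (D i 3)
          + (- 2 * S2 * b i) *\<^sub>R X 3 + (2 * C2 * b i) *\<^sub>R JN (X 3)" for i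
    using dPgen[OF I3(3) th2d rel3, of i] by (simp add: C2_def S2_def b_def)
  have dM: "gN (D i 1) (X 1) = 0" if "i \<in> {1,2,3}" for i
  proof -
    define Y' where "Y' = frechet_derivative (Y 1) (at u)"
    have yd: "(Y 1 has_derivative Y') (at u)" using Ydf[OF I3(1)] by (simp add: Y'_def)
    have phd: "((\<lambda>x. gN (Y 1 x) (Y 1 x)) has_derivative (\<lambda>h. gN (Y 1 u) (Y' h) + gN (Y' h) (Y 1 u))) (at u)"
      by (rule bounded_bilinear.FDERIV[OF bb_gN yd yd])
    have "gN (Y 1 u) (Y' (E i u)) + gN (Y' (E i u)) (Y 1 u) = 0"
      by (rule deriv_const_zero[OF U_open u _ phd]) (use frame in \<open>simp add: Y_def\<close>)
    then show ?thesis using gN_sym[of "Y 1 u" "Y' (E i u)"] by (simp add: D_def X_def Y'_def)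
  qed
  have dL: "gN (JN (D i j)) (X k) + gN (JN (X j)) (D i k) = 0"
    if "i \<in> {1,2,3}" "j \<in> {1,2,3}" "k \<in> {1,2,3}" for i j k
  proof -
    define Yj where "Yj = frechet_derivative (Y j) (at u)"
    define Yk where "Yk = frechet_derivative (Y k) (at u)"
    have yj: "(Y j has_derivative Yj) (at u)" using Ydf[OF that(2)] by (simp add: Yj_def)
    have yk: "(Y k has_derivative Yk) (at u)" using Ydf[OF that(3)] by (simp add: Yk_def)
    have jd: "((\<lambda>x. JN (Y j x)) has_derivative (\<lambda>w. JN (Yj w))) (at u)"
      by (rule bounded_linear.has_derivative[OF bl_JN yj])
    have phd: "((\<lambda>x. gN (JN (Y j x)) (Y k x)) has_derivative (\<lambda>h. gN (JN (Y j u)) (Yk h) + gN (JN (Yj h)) (Y k u))) (at u)"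
      by (rule bounded_bilinear.FDERIV[OF bb_gN jd yk])
    have "gN (JN (Y j u)) (Yk (E i u)) + gN (JN (Yj (E i u))) (Y k u) = 0"
      by (rule deriv_const_zero[OF U_open u _ phd]) (simp add: Y_def LagU)
    then show ?thesis by (simp add: D_def X_def Yj_def Yk_def add.commute)
  qed
  have dS: "gN (D i j - D j i + brk (X i) (X j)) (JN (X k)) = 0"
    if ijk: "i \<in> {1,2,3}" "j \<in> {1,2,3}" "k \<in> {1,2,3}" for i j k
  proof -
    have det: "det (fst (F u)) = 1" "det (snd (F u)) = 1" using F_in_N u by (auto simp: SL2_def)
    have Xf: "X m = (adj2 (fst (F u)) ** fst (dF' (E m u)), adj2 (snd (F u)) ** snd (dF' (E m u)))" for m
      by (simp add: X_def Y_def tanF_def ltriv_def inv_adj2[OF det(1)] inv_adj2[OF det(2)] dF'_def)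
    have tr: "trace (adj2 (fst (F u)) ** fst (dF' (E m u))) = 0" "trace (adj2 (snd (F u)) ** snd (dF' (E m u))) = 0" for m
      using sl2U[of "E m u"] Xf[of m] by (simp_all add: X_def Y_def sl2_def)
    define w0 where "w0 = e' j (E i u) - e' i (E j u)"
    have linF2: "linear (F2 v)" for v using d2u[of v] by (simp add: F2_def linear_frechet_derivative)
    have symS: "(\<Sum>v\<in>Basis. (E j u \<bullet> v) *\<^sub>R F2 v (E i u)) = (\<Sum>v\<in>Basis. (E i u \<bullet> v) *\<^sub>R F2 v (E j u))"
      by (rule lin_sym_sum) (simp_all add: linF2[unfolded F2_def] F2_def sym2)
    have ldF: "linear dF'" using dFx[OF u] by (simp add: dF'_def linear_frechet_derivative)
    define Wij where "Wij = dF' (e' j (E i u)) + (\<Sum>v\<in>Basis. (E j u \<bullet> v) *\<^sub>R F2 v (E i u))"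
    define Wji where "Wji = dF' (e' i (E j u)) + (\<Sum>v\<in>Basis. (E i u \<bullet> v) *\<^sub>R F2 v (E j u))"
    have Wd: "Wij - Wji = dF' w0" by (simp add: Wij_def Wji_def symS w0_def linear_diff[OF ldF])
    have Dij: "D i j = (adj2 (fst (dF' (E i u))) ** fst (dF' (E j u)) + adj2 (fst (F u)) ** fst Wij,
        adj2 (snd (dF' (E i u))) ** snd (dF' (E j u)) + adj2 (snd (F u)) ** snd Wij)"
      using Dform[OF ijk(2), of i] by (simp add: Wij_def Let_def)
    have Dji: "D j i = (adj2 (fst (dF' (E j u))) ** fst (dF' (E i u)) + adj2 (fst (F u)) ** fst Wji,
        adj2 (snd (dF' (E j u))) ** snd (dF' (E i u)) + adj2 (snd (F u)) ** snd Wji)"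
      using Dform[OF ijk(1), of j] by (simp add: Wji_def Let_def)
    have f1: "fst (D i j - D j i + brk (X i) (X j)) = adj2 (fst (F u)) ** (fst Wij - fst Wji)"
      unfolding Dij Dji using bracket_id[OF det(1) tr(1)[of i] tr(1)[of j]]
      by (simp add: brk_def Xf)
    have f2: "snd (D i j - D j i + brk (X i) (X j)) = adj2 (snd (F u)) ** (snd Wij - snd Wji)"
      unfolding Dij Dji using bracket_id[OF det(2) tr(2)[of i] tr(2)[of j]]
      by (simp add: brk_def Xf)
    have "D i j - D j i + brk (X i) (X j) = tanF F u w0"
    proof -
      have "fst Wij - fst Wji = fst (dF' w0)" "snd Wij - snd Wji = snd (dF' w0)" using Wd
        by (metis fst_diff snd_diff)+
      then show ?thesis using f1 f2
        by (simp add: prod_eq_iff tanF_def ltriv_def inv_adj2[OF det(1)] inv_adj2[OF det(2)] dF'_def)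
    qed
    then show ?thesis using LagU[OF u, of "E k u" w0] by (simp add: gN_sym X_def Y_def)
  qed
  have dA: "2 * a i + b i = 0" if "i \<in> {1,2,3}" for i
  proof -
    have cf: "continuous_on U (\<lambda>x. 2 * \<theta>1 x + \<theta>2 x)" using cth by (intro continuous_intros)
    obtain V where V: "open V" "u \<in> V" "\<And>x. x \<in> V \<Longrightarrow> 2 * \<theta>1 x + \<theta>2 x = 2 * \<theta>1 u + \<theta>2 u"
      using loc_const_angle[OF U_open u cf] angles by blast
    have fd: "((\<lambda>x. 2 * \<theta>1 x + \<theta>2 x) has_derivative (\<lambda>w. 2 * frechet_derivative \<theta>1 (at u) w + frechet_derivative \<theta>2 (at u) w)) (at u)"
      by (rule has_derivative_add[OF th1d dth2])
    show ?thesis using deriv_const_zero[OF V(1) V(2) V(3) fd] by (simp add: a_def b_def)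
  qed
  have core_res: "h 1 1 1 u = 0 \<and> h 1 1 2 u = 0 \<and> h 1 1 3 u = 0 \<and> a 1 = 0 \<and> a 2 = - h 2 2 2 u \<and>
     a 3 = - h 1 2 3 u \<and> b 1 = - h 3 3 2 u \<and> b 2 = - h 3 3 1 u \<and> b 3 = - h 3 3 3 u \<and>
     h 3 3 1 u = - 2 * h 2 2 2 u \<and> h 3 3 2 u = 0 \<and> h 3 3 3 u = - 2 * h 1 2 3 u"
  proof -
    have Lag': "\<And>j k. j \<in> {1,2,3} \<Longrightarrow> k \<in> {1,2,3} \<Longrightarrow> gN (JN (X j)) (X k) = 0" using Lag by blast
    have dP1': "\<And>i. i \<in> {1,2,3} \<Longrightarrow> PN (D i 1) = C *\<^sub>R D i 1 + S *\<^sub>R JN (D i 1)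
          + (- 2 * S * a i) *\<^sub>R X 1 + (2 * C * a i) *\<^sub>R JN (X 1)" using dP1 by blast
    have dP3': "\<And>i. i \<in> {1,2,3} \<Longrightarrow> PN (D i 3) = C2 *\<^sub>R D i 3 + S2 *\<^sub>R JN (D i 3)
          + (- 2 * S2 * b i) *\<^sub>R X 3 + (2 * C2 * b i) *\<^sub>R JN (X 3)" using dP3 by blast
    show ?thesis by (rule core[OF Lag' fr nrm P1 P2 P3 CS1 CS2 CS3 gss dP1' dP3' dM dL dS dA])
  qed
  show "h 1 1 1 u = 0 \<and> h 1 1 2 u = 0 \<and> h 1 1 3 u = 0 \<and>       frechet_derivative \<theta>1 (at u) (E 1 u) = 0 \<and>       frechet_derivative \<theta>1 (at u) (E 2 u) = - h 2 2 2 u \<and>       frechet_derivative \<theta>1 (at u) (E 3 u) = - h 1 2 3 u \<and>       frechet_derivative \<theta>2 (at u) (E 1 u) = - h 3 3 2 u \<and>       frechet_derivative \<theta>2 (at u) (E 2 u) = - h 3 3 1 u \<and>       frechet_derivative \<theta>2 (at u) (E 3 u) = - h 3 3 3 u \<and>       h 3 3 1 u = - 2 * h 2 2 2 u \<and> h 3 3 2 u = 0 \<and> h 3 3 3 u = - 2 * h 1 2 3 u"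
    using core_res by (simp add: a_def b_def)
qed

end
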